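(* Consider the multistage ANC game described in the context, with linear plant $x^{t+1}=A_tx^t+b^tB_tu^t$, and assume: (i) for every $t=0,\dots,T-1$ there exist scalars $e_t,d_t$ and functions $\alpha_t,\beta_t:\mathbb{R}_+\to\mathbb{R}$ with $\lim_{y\to+\infty}\alpha_t(y)=\lim_{y\to+\infty}\beta_t(y)=+\infty$, $\alpha_t(y)\ge e_t$, $\beta_t(y)\ge d_t$, such that $\sigma^t(x,u)\ge\alpha_t(\|u\|)+\beta_t(\|x\|)$ for all $x\in\mathbb{R}^n$, $u\in\mathbb{R}^m$; (ii) for all $t=0,\dots,T-1$, $\sigma^t:\mathbb{R}^n\times\mathbb{R}^m\to\mathbb{R}_+$ is convex in both its arguments (jointly); (iii) $\sigma^T:\mathbb{R}^n\to\mathbb{R}_+$ is convex and there exist a scalar $d_T$ and a function $\beta_T:\mathbb{R}_+\to\mathbb{R}_+$ with $\lim_{y\to+\infty}\beta_T(y)=+\infty$, $\beta_T(y)\ge d_T$, such that $\sigma^T(x)\ge\beta_T(\|x\|)$; (iv) $\sigma^T$ is continuous; for every $t=0,\dots,T-1$, $\sigma^t(\cdot,u)$ is continuous uniformly in $u\in\mathbb{R}^m$, and $\sigma^t(x,\cdot)$ is continuous for every $x\in\mathbb{R}^n$. Define $V_T(x,s)=\sigma^T(x)-g^T(s)$ and, recursively for $t=T-1,\dots,0$, \[ V_t(x,s)=\inf_{u\in\mathbb{R}^m}\sup_{p\in\mathcal{S}_{N-1}}p'\mathcal{V}_t(x,s,u), \] where $\mathcal{V}_t(x,s,u)\in\mathbb{R}^N$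 has components \[ [\mathcal{V}_t(x,s,u)]_a=\sigma^t(x,u)-g^t(a,s)+\sum_{i\in\mathcal{F}}P^t_{si}(a)\big[q^t_iV_{t+1}(A_tx+B_tu,i)+(1-q^t_i)V_{t+1}(A_tx,i)\big]. \] Then for all $t=0,\dots,T-1$, $x\in\mathbb{R}^n$, $s\in\mathcal{F}$, the value functions $V_t$ are well defined, in the sense that \[ \inf_{u\in\mathbb{R}^m}\sup_{p\in\mathcal{S}_{N-1}}p'\mathcal{V}_t(x,s,u)=\sup_{p\in\mathcal{S}_{N-1}}\inf_{u\in\mathbb{R}^m}p'\mathcal{V}_t(x,s,u) \] and this common value is finite, and $V_t(\cdot,s)$ is convex and continuous in $x$. Furthermore, the strategy pair defined by $(u^* )^t=\arg\inf_{u\in\mathbb{R}^m}\sup_{p\in\mathcal{S}_{N-1}}p'\mathcal{V}_t(x,s,u)$ and $(p^* )^t=\arg\sup_{p\in\mathcal{S}_{N-1}}\inf_{u\in\mathbb{R}^m}p'\mathcal{V}_t(x,s,u)$ is a saddle-point strategy of the multistage ANC game.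
   Context: Multistage ANC game on horizon $\{0,\dots,T\}$. Regimes $\mathcal{F}=\{1,\dots,|\mathcal{F}|\}$, jammer actions $\mathcal{A}=\{1,\dots,N\}$, $\mathcal{S}_{N-1}$ the unit simplex in $\mathbb{R}^N$. For each $t$ and $a\in\mathcal{A}$, $P^t(a)$ is an $|\mathcal{F}|\times|\mathcal{F}|$ row-stochastic matrix, and $q^t=(q^t_1,\dots,q^t_{|\mathcal{F}|})'\in[0,1]^{|\mathcal{F}|}$. $A_t,B_t$ are real matrices of sizes $n\times n$, $n\times m$. The state is $(x^t,s^t)\in\mathbb{R}^n\times\mathcal{F}$, with given initial $(x^0,s^0)$. At each $t\le T-1$ the controller, observing $(x^t,s^t)$, chooses $u^t\in\mathbb{R}^m$; the jammer, observing $(x^t,s^t)$ and $u^t$, chooses a probability vector $p^t\in\mathcal{S}_{N-1}$ and $a^t$ is drawn according to $p^t$; then $s^{t+1}$ is drawn with $\mathrm{Pr}(s^{t+1}=i\mid s^t=j,a^t=a)=P^t_{ji}(a)$, $b^t\in\{0,1\}$ is drawn with $\mathrm{Pr}(b^t=1\mid s^{t+1}=i)=q^t_i$ (conditionally independent of everything else given $s^{t+1}$), and $x^{t+1}=A_tx^t+b^tB_tu^t$. Stage costs $\sigma^t:\mathbb{R}^n\times\mathbb{R}^m\to\mathbb{R}_+$, terminal cost $\sigma^T:\mathbb{R}^n\to\mathbb{R}_+$, jammer costs $g^t:\mathcal{A}\times\mathcal{F}\to\mathbb{R}$ ($t<T$) and $g^T:\mathcal{F}\to\mathbb{R}$. The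 total payoff is $\Sigma=\sum_{t=0}^{T-1}\sigma^t(x^t,u^t)+\sigma^T(x^T)-\sum_{t=0}^{T-1}g^t(a^t,s^t)$; the controller minimizes and the jammer maximizes its expectation $\mathbb{E}^{u,p}[\Sigma]$ over strategy sequences $\{u^t\}$, $\{p^t\}$. A saddle-point strategy is a pair $(\{(u^* )^t\},\{(p^* )^t\})$ with $\mathbb{E}^{u^*,p^*}[\Sigma]=\inf_{\{u^t\}}\sup_{\{p^t\}}\mathbb{E}^{u,p}[\Sigma]=\sup_{\{p^t\}}\inf_{\{u^t\}}\mathbb{E}^{u,p}[\Sigma]$. *)

theory Defs
  imports "HOL-Analysis.Analysis"
begin

text \<open>Regimes: finite type 'f; jammer actions: finite type 'act;
  state space real^'n; controls real^'m.
  P t a j i = Pr(s^{t+1} = i | s^t = j, a^t = a); q t i = Pr(b^t = 1 | s^{t+1} = i).\<close>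

definition prob_simplex :: "('act::finite \<Rightarrow> real) set" where
  "prob_simplex = {p. (\<forall>a. 0 \<le> p a) \<and> (\<Sum>a\<in>UNIV. p a) = 1}"

definition ip :: "('act::finite \<Rightarrow> real) \<Rightarrow> ('act \<Rightarrow> real) \<Rightarrow> real" where
  "ip p v = (\<Sum>a\<in>UNIV. p a * v a)"

definition stage_vec ::
  "(nat \<Rightarrow> real^'n^'n) \<Rightarrow> (nat \<Rightarrow> real^'m^'n) \<Rightarrow> (nat \<Rightarrow> 'act \<Rightarrow> 'f::finite \<Rightarrow> 'f \<Rightarrow> real)
   \<Rightarrow> (nat \<Rightarrow> 'f \<Rightarrow> real) \<Rightarrow> (nat \<Rightarrow> real^'n \<Rightarrow> real^'m \<Rightarrow> real) \<Rightarrow> (nat \<Rightarrow> 'act \<Rightarrow> 'f \<Rightarrow> real)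
   \<Rightarrow> nat \<Rightarrow> (real^'n \<Rightarrow> 'f \<Rightarrow> real) \<Rightarrow> real^'n \<Rightarrow> 'f \<Rightarrow> real^'m \<Rightarrow> 'act \<Rightarrow> real" where
  "stage_vec A B P q \<sigma> g t W x s u a =
     \<sigma> t x u - g t a s
     + (\<Sum>i\<in>UNIV. P t a s i * (q t i * W (A t *v x + B t *v u) i + (1 - q t i) * W (A t *v x) i))"

text \<open>Backward recursion: Vrec k = V_{T-k}.\<close>
fun Vrec ::
  "nat \<Rightarrow> (nat \<Rightarrow> real^'n^'n) \<Rightarrow> (nat \<Rightarrow> real^'m^'n) \<Rightarrow> (nat \<Rightarrow> 'act::finite \<Rightarrow> 'f::finite \<Rightarrow> 'f \<Rightarrow> real)
   \<Rightarrow> (nat \<Rightarrow> 'f \<Rightarrow> real) \<Rightarrow> (nat \<Rightarrow> real^'n \<Rightarrow> real^'m \<Rightarrow> real) \<Rightarrow> (real^'n \<Rightarrow> real)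
   \<Rightarrow> (nat \<Rightarrow> 'act \<Rightarrow> 'f \<Rightarrow> real) \<Rightarrow> ('f \<Rightarrow> real) \<Rightarrow> nat \<Rightarrow> real^'n \<Rightarrow> 'f \<Rightarrow> real" where
  "Vrec T A B P q \<sigma> \<sigma>T g gT 0 x s = \<sigma>T x - gT s"
| "Vrec T A B P q \<sigma> \<sigma>T g gT (Suc k) x s =
     real_of_ereal (INF u\<in>UNIV. SUP p\<in>prob_simplex.
        ereal (ip p (stage_vec A B P q \<sigma> g (T - Suc k) (Vrec T A B P q \<sigma> \<sigma>T g gT k) x s u)))"

text \<open>Value function V_t (meaningful for t \<le> T).\<close>
definition Vfun where
  "Vfun T A B P q \<sigma> \<sigma>T g gT t = Vrec T A B P q \<sigma> \<sigma>T g gT (T - t)"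

text \<open>Game dynamics along a realisation \<omega> t = (a^t, s^{t+1}, b^t), under controller
  feedback strategy u t x s.\<close>
fun traj ::
  "(nat \<Rightarrow> real^'n^'n) \<Rightarrow> (nat \<Rightarrow> real^'m^'n) \<Rightarrow> (nat \<Rightarrow> real^'n \<Rightarrow> 'f \<Rightarrow> real^'m)
   \<Rightarrow> real^'n \<Rightarrow> 'f \<Rightarrow> (nat \<Rightarrow> 'act \<times> 'f \<times> bool) \<Rightarrow> nat \<Rightarrow> (real^'n) \<times> 'f" where
  "traj A B u x0 s0 \<omega> 0 = (x0, s0)"
| "traj A B u x0 s0 \<omega> (Suc t) =
     (let (x, s) = traj A B u x0 s0 \<omega> t; (a, s', b) = \<omega> t
      in (A t *v x + of_bool b *\<^sub>R (B t *v u t x s), s'))"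

definition path_prob ::
  "nat \<Rightarrow> (nat \<Rightarrow> real^'n^'n) \<Rightarrow> (nat \<Rightarrow> real^'m^'n) \<Rightarrow> (nat \<Rightarrow> 'act \<Rightarrow> 'f \<Rightarrow> 'f \<Rightarrow> real)
   \<Rightarrow> (nat \<Rightarrow> 'f \<Rightarrow> real) \<Rightarrow> (nat \<Rightarrow> real^'n \<Rightarrow> 'f \<Rightarrow> real^'m)
   \<Rightarrow> (nat \<Rightarrow> real^'n \<Rightarrow> 'f \<Rightarrow> real^'m \<Rightarrow> 'act \<Rightarrow> real)
   \<Rightarrow> real^'n \<Rightarrow> 'f \<Rightarrow> (nat \<Rightarrow> 'act \<times> 'f \<times> bool) \<Rightarrow> real" where
  "path_prob T A B P q u p x0 s0 \<omega> =
     (\<Prod>t<T. let (x, s) = traj A B u x0 s0 \<omega> t; (a, s', b) = \<omega> t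
             in p t x s (u t x s) a * P t a s s' * (if b then q t s' else 1 - q t s'))"

definition payoff ::
  "nat \<Rightarrow> (nat \<Rightarrow> real^'n^'n) \<Rightarrow> (nat \<Rightarrow> real^'m^'n) \<Rightarrow> (nat \<Rightarrow> real^'n \<Rightarrow> real^'m \<Rightarrow> real)
   \<Rightarrow> (real^'n \<Rightarrow> real) \<Rightarrow> (nat \<Rightarrow> 'act \<Rightarrow> 'f \<Rightarrow> real) \<Rightarrow> ('f \<Rightarrow> real)
   \<Rightarrow> (nat \<Rightarrow> real^'n \<Rightarrow> 'f \<Rightarrow> real^'m)
   \<Rightarrow> real^'n \<Rightarrow> 'f \<Rightarrow> (nat \<Rightarrow> 'act \<times> 'f \<times> bool) \<Rightarrow> real" where
  "payoff T A B \<sigma> \<sigma>T g gT u x0 s0 \<omega> =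
     (\<Sum>t<T. let (x, s) = traj A B u x0 s0 \<omega> t; (a, s', b) = \<omega> t
            in \<sigma> t x (u t x s) - g t a s)
     + \<sigma>T (fst (traj A B u x0 s0 \<omega> T)) - gT (snd (traj A B u x0 s0 \<omega> T))"

definition expected_payoff ::
  "nat \<Rightarrow> (nat \<Rightarrow> real^'n^'n) \<Rightarrow> (nat \<Rightarrow> real^'m^'n) \<Rightarrow> (nat \<Rightarrow> 'act::finite \<Rightarrow> 'f::finite \<Rightarrow> 'f \<Rightarrow> real)
   \<Rightarrow> (nat \<Rightarrow> 'f \<Rightarrow> real) \<Rightarrow> (nat \<Rightarrow> real^'n \<Rightarrow> real^'m \<Rightarrow> real)
   \<Rightarrow> (real^'n \<Rightarrow> real) \<Rightarrow> (nat \<Rightarrow> 'act \<Rightarrow> 'f \<Rightarrow> real) \<Rightarrow> ('f \<Rightarrow> real)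
   \<Rightarrow> real^'n \<Rightarrow> 'f
   \<Rightarrow> (nat \<Rightarrow> real^'n \<Rightarrow> 'f \<Rightarrow> real^'m)
   \<Rightarrow> (nat \<Rightarrow> real^'n \<Rightarrow> 'f \<Rightarrow> real^'m \<Rightarrow> 'act \<Rightarrow> real) \<Rightarrow> real" where
  "expected_payoff T A B P q \<sigma> \<sigma>T g gT x0 s0 u p =
     (\<Sum>\<omega>\<in>PiE {..<T} (\<lambda>_. UNIV).
        path_prob T A B P q u p x0 s0 \<omega> * payoff T A B \<sigma> \<sigma>T g gT u x0 s0 \<omega>)"

definition jammer_strats :: "nat \<Rightarrow> (nat \<Rightarrow> real^'n \<Rightarrow> 'f \<Rightarrow> real^'m \<Rightarrow> 'act::finite \<Rightarrow> real) set" where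
  "jammer_strats T = {p. \<forall>t<T. \<forall>x s u. p t x s u \<in> prob_simplex}"

definition saddle_point where
  "saddle_point T A B P q \<sigma> \<sigma>T g gT x0 s0 us ps \<longleftrightarrow>
     ps \<in> jammer_strats T \<and>
     ereal (expected_payoff T A B P q \<sigma> \<sigma>T g gT x0 s0 us ps)
       = (INF u\<in>UNIV. SUP p\<in>jammer_strats T. ereal (expected_payoff T A B P q \<sigma> \<sigma>T g gT x0 s0 u p)) \<and>
     ereal (expected_payoff T A B P q \<sigma> \<sigma>T g gT x0 s0 us ps)
       = (SUP p\<in>jammer_strats T. INF u\<in>UNIV. ereal (expected_payoff T A B P q \<sigma> \<sigma>T g gT x0 s0 u p))"

end

theory Submission
  imports Defs
begin


definition consw :: "'c \<Rightarrow> (nat \<Rightarrow> 'c) \<Rightarrow> nat \<Rightarrow> 'c" where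
  "consw c \<omega> k = (case k of 0 \<Rightarrow> c | Suc j \<Rightarrow> \<omega> j)"

lemma consw_0[simp]: "consw c \<omega> 0 = c" and consw_Suc[simp]: "consw c \<omega> (Suc j) = \<omega> j"
  by (simp_all add: consw_def)

lemma traj_consw:
  "traj A B u x0 s0 (consw (a, s', b) \<omega>) (Suc n) =
   traj (\<lambda>t. A (Suc t)) (\<lambda>t. B (Suc t)) (\<lambda>t. u (Suc t))
        (A 0 *v x0 + of_bool b *\<^sub>R (B 0 *v u 0 x0 s0)) s' \<omega> n"
proof (induction n)
  case 0
  then show ?case by simp
next
  case (Suc n)
  show ?case
    unfolding traj.simps(2)[of A B u x0 s0 "consw (a, s', b) \<omega>" "Suc n"] Suc.IH consw_Suc
      traj.simps(2)[of "\<lambda>t. A (Suc t)" "\<lambda>t. B (Suc t)" "\<lambda>t. u (Suc t)"] ..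
qed

lemma payoff_consw:
  "payoff (Suc T) A B \<sigma> \<sigma>T g gT u x0 s0 (consw (a, s', b) \<omega>) =
   \<sigma> 0 x0 (u 0 x0 s0) - g 0 a s0 +
   payoff T (\<lambda>t. A (Suc t)) (\<lambda>t. B (Suc t)) (\<lambda>t. \<sigma> (Suc t)) \<sigma>T (\<lambda>t. g (Suc t)) gT (\<lambda>t. u (Suc t))
        (A 0 *v x0 + of_bool b *\<^sub>R (B 0 *v u 0 x0 s0)) s' \<omega>"
  unfolding payoff_def
  by (simp only: sum.lessThan_Suc_shift traj_consw consw_Suc consw_0 traj.simps(1)) (simp add: algebra_simps)

lemma path_prob_consw:
  "path_prob (Suc T) A B P q u p x0 s0 (consw (a, s', b) \<omega>) =
   p 0 x0 s0 (u 0 x0 s0) a * P 0 a s0 s' * (if b then q 0 s' else 1 - q 0 s') *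
   path_prob T (\<lambda>t. A (Suc t)) (\<lambda>t. B (Suc t)) (\<lambda>t. P (Suc t)) (\<lambda>t. q (Suc t)) (\<lambda>t. u (Suc t))
        (\<lambda>t. p (Suc t)) (A 0 *v x0 + of_bool b *\<^sub>R (B 0 *v u 0 x0 s0)) s' \<omega>"
  unfolding path_prob_def
  by (simp only: prod.lessThan_Suc_shift traj_consw consw_Suc consw_0 traj.simps(1)) simp

lemma bij_consw:
  "bij_betw (\<lambda>(c, \<omega>). consw c \<omega>) ((UNIV::'c set) \<times> PiE {..<n} (\<lambda>_. UNIV)) (PiE {..<Suc n} (\<lambda>_. UNIV))"
proof -
  have 1: "consw c \<omega> \<in> PiE {..<Suc n} (\<lambda>_. UNIV)" if "\<omega> \<in> PiE {..<n} (\<lambda>_. UNIV)" for c \<omega>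
  proof (rule PiE_I)
    fix k assume "k \<notin> {..<Suc n}"
    then obtain j where "k = Suc j" "j \<notin> {..<n}" by (cases k) auto
    then show "consw c \<omega> k = undefined" using PiE_arb[OF that] by simp
  qed simp
  have 2: "(\<lambda>k. \<omega> (Suc k)) \<in> PiE {..<n} (\<lambda>_. UNIV)" if "\<omega> \<in> PiE {..<Suc n} (\<lambda>_. UNIV)" for \<omega>
  proof (rule PiE_I)
    fix k assume "k \<notin> {..<n}"
    then show "\<omega> (Suc k) = undefined" using PiE_arb[OF that] by simp
  qed simp
  have 3: "consw (\<omega> 0) (\<lambda>k. \<omega> (Suc k)) = \<omega>" for \<omega> :: "nat \<Rightarrow> 'c"
    by (rule ext) (simp add: consw_def split: nat.split)
  have 4: "(\<lambda>k. consw c \<omega> (Suc k)) = \<omega>" for c and \<omega> :: "nat \<Rightarrow> 'c"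
    by simp
  show ?thesis
    apply (rule bij_betwI[where g = "\<lambda>\<omega>. (\<omega> 0, \<lambda>k. \<omega> (Suc k))"])
       apply (rule Pi_I, erule SigmaE, simp add: 1)
      apply (rule Pi_I, simp add: 2)
     apply (simp split: prod.splits)
    apply (simp add: 3)
    done
qed

lemma sum_PiE_Suc:
  fixes F :: "(nat \<Rightarrow> 'c::finite) \<Rightarrow> real"
  shows "(\<Sum>\<omega>\<in>PiE {..<Suc n} (\<lambda>_. UNIV). F \<omega>) =
         (\<Sum>c\<in>UNIV. \<Sum>\<omega>\<in>PiE {..<n} (\<lambda>_. UNIV). F (consw c \<omega>))"
proof -
  have "(\<Sum>\<omega>\<in>PiE {..<Suc n} (\<lambda>_. UNIV). F \<omega>) =
        (\<Sum>x\<in>UNIV \<times> PiE {..<n} (\<lambda>_. UNIV). F ((\<lambda>(c, \<omega>). consw c \<omega>) x))"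
    using sum.reindex_bij_betw[OF bij_consw, of F n] by simp
  also have "\<dots> = (\<Sum>c\<in>UNIV. \<Sum>\<omega>\<in>PiE {..<n} (\<lambda>_. UNIV). F (consw c \<omega>))"
    by (subst sum.cartesian_product) (simp add: case_prod_beta)
  finally show ?thesis .
qed

lemma sum_pair_UNIV:
  fixes G :: "'a::finite \<Rightarrow> 'c::finite \<Rightarrow> real"
  shows "(\<Sum>x\<in>UNIV. G (fst x) (snd x)) = (\<Sum>a\<in>UNIV. \<Sum>c\<in>UNIV. G a c)"
proof -
  have "(UNIV :: ('a \<times> 'c) set) = UNIV \<times> UNIV" by simp
  then show ?thesis by (simp add: sum.cartesian_product case_prod_beta)
qed

lemma sum_triple:
  fixes F :: "'a::finite \<Rightarrow> 'b::finite \<Rightarrow> bool \<Rightarrow> real"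
  shows "(\<Sum>c\<in>UNIV. F (fst c) (fst (snd c)) (snd (snd c))) = (\<Sum>a\<in>UNIV. \<Sum>s\<in>UNIV. F a s True + F a s False)"
proof -
  have "(\<Sum>c\<in>UNIV. F (fst c) (fst (snd c)) (snd (snd c))) = (\<Sum>a\<in>UNIV. \<Sum>c\<in>UNIV. F a (fst c) (snd c))"
    by (rule sum_pair_UNIV[of "\<lambda>a c. F a (fst c) (snd c)"])
  also have "\<dots> = (\<Sum>a\<in>UNIV. \<Sum>s\<in>UNIV. \<Sum>b\<in>UNIV. F a s b)"
    by (rule sum.cong[OF refl], rule sum_pair_UNIV)
  also have "\<dots> = (\<Sum>a\<in>UNIV. \<Sum>s\<in>UNIV. F a s True + F a s False)"
    by (simp add: UNIV_bool add.commute)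
  finally show ?thesis .
qed


lemma path_prob_consw':
  "path_prob (Suc T) A B P q u p x0 s0 (consw c \<omega>) =
   p 0 x0 s0 (u 0 x0 s0) (fst c) * P 0 (fst c) s0 (fst (snd c)) *
     (if snd (snd c) then q 0 (fst (snd c)) else 1 - q 0 (fst (snd c))) *
   path_prob T (\<lambda>t. A (Suc t)) (\<lambda>t. B (Suc t)) (\<lambda>t. P (Suc t)) (\<lambda>t. q (Suc t)) (\<lambda>t. u (Suc t))
        (\<lambda>t. p (Suc t)) (A 0 *v x0 + of_bool (snd (snd c)) *\<^sub>R (B 0 *v u 0 x0 s0)) (fst (snd c)) \<omega>"
  by (cases c) (simp only: path_prob_consw fst_conv snd_conv)

lemma payoff_consw':
  "payoff (Suc T) A B \<sigma> \<sigma>T g gT u x0 s0 (consw c \<omega>) =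
   \<sigma> 0 x0 (u 0 x0 s0) - g 0 (fst c) s0 +
   payoff T (\<lambda>t. A (Suc t)) (\<lambda>t. B (Suc t)) (\<lambda>t. \<sigma> (Suc t)) \<sigma>T (\<lambda>t. g (Suc t)) gT (\<lambda>t. u (Suc t))
        (A 0 *v x0 + of_bool (snd (snd c)) *\<^sub>R (B 0 *v u 0 x0 s0)) (fst (snd c)) \<omega>"
  by (cases c) (simp only: payoff_consw fst_conv snd_conv)

lemma simplex_sum: "p \<in> prob_simplex \<Longrightarrow> (\<Sum>a\<in>UNIV. p a) = 1"
  by (simp add: prob_simplex_def)

lemma total_prob:
  fixes P :: "nat \<Rightarrow> 'act::finite \<Rightarrow> 'f::finite \<Rightarrow> 'f \<Rightarrow> real"
  assumes "\<forall>t<T. \<forall>x s u. p t x s u \<in> prob_simplex"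
    and P_stoch: "\<And>t a j. (\<Sum>i\<in>UNIV. P t a j i) = 1"
  shows "(\<Sum>\<omega>\<in>PiE {..<T} (\<lambda>_. UNIV). path_prob T A B P q u p x0 s0 \<omega>) = 1"
  using assms(1) P_stoch
proof (induction T arbitrary: A B P q u p x0 s0)
  case 0
  then show ?case by (simp add: path_prob_def)
next
  case (Suc T)
  let ?w = "\<lambda>a s' b. p 0 x0 s0 (u 0 x0 s0) a * P 0 a s0 s' * (if b then q 0 s' else 1 - q 0 s')"
  have IH: "(\<Sum>\<omega>\<in>PiE {..<T} (\<lambda>_. UNIV). path_prob T (\<lambda>t. A (Suc t)) (\<lambda>t. B (Suc t)) (\<lambda>t. P (Suc t)) (\<lambda>t. q (Suc t)) (\<lambda>t. u (Suc t))
        (\<lambda>t. p (Suc t)) x s \<omega>) = 1" for x s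
    by (rule Suc.IH) (use Suc.prems in auto)
  have "(\<Sum>\<omega>\<in>PiE {..<Suc T} (\<lambda>_. UNIV). path_prob (Suc T) A B P q u p x0 s0 \<omega>)
      = (\<Sum>c\<in>UNIV. ?w (fst c) (fst (snd c)) (snd (snd c)))"
    by (simp only: sum_PiE_Suc path_prob_consw' sum_distrib_left[symmetric] IH mult_1_right)
  also have "\<dots> = (\<Sum>a\<in>UNIV. \<Sum>s\<in>UNIV. ?w a s True + ?w a s False)"
    by (rule sum_triple)
  also have "\<dots> = (\<Sum>a\<in>UNIV. p 0 x0 s0 (u 0 x0 s0) a * (\<Sum>s\<in>UNIV. P 0 a s0 s))"
    by (simp add: sum_distrib_left sum_distrib_right algebra_simps)
  also have "\<dots> = 1"
    using Suc.prems by (simp add: simplex_sum)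
  finally show ?case .
qed

lemma exp_step:
  fixes P :: "nat \<Rightarrow> 'act::finite \<Rightarrow> 'f::finite \<Rightarrow> 'f \<Rightarrow> real"
  assumes "\<forall>t<Suc T. \<forall>x s u. p t x s u \<in> prob_simplex"
    and P_stoch: "\<And>t a j. (\<Sum>i\<in>UNIV. P t a j i) = 1"
  shows "expected_payoff (Suc T) A B P q \<sigma> \<sigma>T g gT x0 s0 u p =
    ip (p 0 x0 s0 (u 0 x0 s0)) (stage_vec A B P q \<sigma> g 0
      (\<lambda>x s. expected_payoff T (\<lambda>t. A (Suc t)) (\<lambda>t. B (Suc t)) (\<lambda>t. P (Suc t)) (\<lambda>t. q (Suc t))
          (\<lambda>t. \<sigma> (Suc t)) \<sigma>T (\<lambda>t. g (Suc t)) gT x s (\<lambda>t. u (Suc t)) (\<lambda>t. p (Suc t)))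
      x0 s0 (u 0 x0 s0))"
proof -
  let ?A = "\<lambda>t. A (Suc t)" and ?B = "\<lambda>t. B (Suc t)" and ?P = "\<lambda>t. P (Suc t)" and ?q = "\<lambda>t. q (Suc t)"
    and ?\<sigma> = "\<lambda>t. \<sigma> (Suc t)" and ?g = "\<lambda>t. g (Suc t)" and ?u = "\<lambda>t. u (Suc t)" and ?p = "\<lambda>t. p (Suc t)"
  let ?E = "\<lambda>x s. expected_payoff T ?A ?B ?P ?q ?\<sigma> \<sigma>T ?g gT x s ?u ?p"
  let ?pp = "\<lambda>x s \<omega>. path_prob T ?A ?B ?P ?q ?u ?p x s \<omega>"
  let ?pay = "\<lambda>x s \<omega>. payoff T ?A ?B ?\<sigma> \<sigma>T ?g gT ?u x s \<omega>"
  let ?u0 = "u 0 x0 s0" let ?p0 = "p 0 x0 s0 (u 0 x0 s0)"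
  let ?w = "\<lambda>a s' b. ?p0 a * P 0 a s0 s' * (if b then q 0 s' else 1 - q 0 s')"
  let ?C = "\<lambda>a. \<sigma> 0 x0 ?u0 - g 0 a s0"
  let ?x1 = "\<lambda>b. A 0 *v x0 + of_bool b *\<^sub>R (B 0 *v ?u0)"
  have TP: "(\<Sum>\<omega>\<in>PiE {..<T} (\<lambda>_. UNIV). ?pp x s \<omega>) = 1" for x s
    by (rule total_prob) (use assms in auto)
  have inner: "(\<Sum>\<omega>\<in>PiE {..<T} (\<lambda>_. UNIV). ?w a s' b * ?pp x s' \<omega> * (?C a + ?pay x s' \<omega>))
       = ?w a s' b * (?C a + ?E x s')" for a s' b x
  proof -
    have "(\<Sum>\<omega>\<in>PiE {..<T} (\<lambda>_. UNIV). ?w a s' b * ?pp x s' \<omega> * (?C a + ?pay x s' \<omega>))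
       = (\<Sum>\<omega>\<in>PiE {..<T} (\<lambda>_. UNIV). (?w a s' b * ?C a) * ?pp x s' \<omega> + ?w a s' b * (?pp x s' \<omega> * ?pay x s' \<omega>))"
      by (rule sum.cong) (simp_all add: algebra_simps)
    also have "\<dots> = (?w a s' b * ?C a) * (\<Sum>\<omega>\<in>PiE {..<T} (\<lambda>_. UNIV). ?pp x s' \<omega>)
        + ?w a s' b * (\<Sum>\<omega>\<in>PiE {..<T} (\<lambda>_. UNIV). ?pp x s' \<omega> * ?pay x s' \<omega>)"
      by (simp only: sum.distrib sum_distrib_left)
    also have "\<dots> = ?w a s' b * (?C a + ?E x s')"
      by (simp only: TP expected_payoff_def) (simp add: algebra_simps)
    finally show ?thesis .
  qed
  have "expected_payoff (Suc T) A B P q \<sigma> \<sigma>T g gT x0 s0 u p =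
      (\<Sum>c\<in>UNIV. \<Sum>\<omega>\<in>PiE {..<T} (\<lambda>_. UNIV). ?w (fst c) (fst (snd c)) (snd (snd c)) *
          ?pp (?x1 (snd (snd c))) (fst (snd c)) \<omega> * (?C (fst c) + ?pay (?x1 (snd (snd c))) (fst (snd c)) \<omega>))"
    unfolding expected_payoff_def
    by (simp only: sum_PiE_Suc path_prob_consw' payoff_consw')
  also have "\<dots> = (\<Sum>c\<in>UNIV. ?w (fst c) (fst (snd c)) (snd (snd c)) * (?C (fst c) + ?E (?x1 (snd (snd c))) (fst (snd c))))"
    by (simp only: inner)
  also have "\<dots> = (\<Sum>a\<in>UNIV. \<Sum>s\<in>UNIV. ?w a s True * (?C a + ?E (?x1 True) s) + ?w a s False * (?C a + ?E (?x1 False) s))"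
    by (rule sum_triple[where F = "\<lambda>a s b. ?w a s b * (?C a + ?E (?x1 b) s)"])
  also have "\<dots> = (\<Sum>a\<in>UNIV. ?p0 a * (?C a * (\<Sum>s\<in>UNIV. P 0 a s0 s) +
        (\<Sum>s\<in>UNIV. P 0 a s0 s * (q 0 s * ?E (A 0 *v x0 + B 0 *v ?u0) s + (1 - q 0 s) * ?E (A 0 *v x0) s))))"
  proof (rule sum.cong[OF refl])
    fix a
    let ?G = "\<lambda>s. q 0 s * ?E (A 0 *v x0 + B 0 *v ?u0) s + (1 - q 0 s) * ?E (A 0 *v x0) s"
    have "?p0 a * (?C a * (\<Sum>s\<in>UNIV. P 0 a s0 s) + (\<Sum>s\<in>UNIV. P 0 a s0 s * ?G s))
        = (\<Sum>s\<in>UNIV. ?p0 a * ?C a * P 0 a s0 s + ?p0 a * (P 0 a s0 s * ?G s))"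
      by (simp only: sum_distrib_left sum.distrib distrib_left mult.assoc)
    also have "\<dots> = (\<Sum>s\<in>UNIV. ?w a s True * (?C a + ?E (?x1 True) s) + ?w a s False * (?C a + ?E (?x1 False) s))"
      by (rule sum.cong[OF refl]) (simp add: algebra_simps)
    finally show "(\<Sum>s\<in>UNIV. ?w a s True * (?C a + ?E (?x1 True) s) + ?w a s False * (?C a + ?E (?x1 False) s))
       = ?p0 a * (?C a * (\<Sum>s\<in>UNIV. P 0 a s0 s) + (\<Sum>s\<in>UNIV. P 0 a s0 s * ?G s))" by simp
  qed
  also have "\<dots> = ip ?p0 (stage_vec A B P q \<sigma> g 0 ?E x0 s0 ?u0)"
    by (simp add: ip_def stage_vec_def P_stoch)
  finally show ?thesis .
qed


lemma ip_mono:
  assumes "p \<in> prob_simplex" "\<And>a. f a \<le> h a"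
  shows "ip p f \<le> ip p h"
  unfolding ip_def using assms
  by (intro sum_mono mult_left_mono) (auto simp: prob_simplex_def)

lemma stage_vec_mono:
  assumes P_nonneg: "\<And>t a j i. 0 \<le> P t a j i"
    and q_range: "\<And>t i. 0 \<le> q t i \<and> q t i \<le> 1"
    and "\<And>x i. W x i \<le> W' x i"
  shows "stage_vec A B P q \<sigma> g t W x s u a \<le> stage_vec A B P q \<sigma> g t W' x s u a"
  unfolding stage_vec_def
proof -
  have "(\<Sum>i\<in>UNIV. P t a s i * (q t i * W (A t *v x + B t *v u) i + (1 - q t i) * W (A t *v x) i))
     \<le> (\<Sum>i\<in>UNIV. P t a s i * (q t i * W' (A t *v x + B t *v u) i + (1 - q t i) * W' (A t *v x) i))"
  proof (rule sum_mono, rule mult_left_mono[OF add_mono])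
    fix i
    show "q t i * W (A t *v x + B t *v u) i \<le> q t i * W' (A t *v x + B t *v u) i"
      using q_range[of t i] assms(3) by (intro mult_left_mono) auto
    show "(1 - q t i) * W (A t *v x) i \<le> (1 - q t i) * W' (A t *v x) i"
      using q_range[of t i] assms(3) by (intro mult_left_mono) auto
    show "0 \<le> P t a s i" by (rule P_nonneg)
  qed
  then show "\<sigma> t x u - g t a s + (\<Sum>i\<in>UNIV. P t a s i * (q t i * W (A t *v x + B t *v u) i + (1 - q t i) * W (A t *v x) i))
    \<le> \<sigma> t x u - g t a s + (\<Sum>i\<in>UNIV. P t a s i * (q t i * W' (A t *v x + B t *v u) i + (1 - q t i) * W' (A t *v x) i))"
    by simp
qed

lemma exp_base:
  "expected_payoff 0 A B P q \<sigma> \<sigma>T g gT x s u p = \<sigma>T x - gT s"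
  by (simp add: expected_payoff_def path_prob_def payoff_def)


definition okPq :: "(nat \<Rightarrow> 'act::finite \<Rightarrow> 'f::finite \<Rightarrow> 'f \<Rightarrow> real) \<Rightarrow> (nat \<Rightarrow> 'f \<Rightarrow> real) \<Rightarrow> bool" where
  "okPq P q \<longleftrightarrow> (\<forall>t a j i. 0 \<le> P t a j i) \<and> (\<forall>t a j. (\<Sum>i\<in>UNIV. P t a j i) = 1) \<and>
     (\<forall>t i. 0 \<le> q t i \<and> q t i \<le> 1)"

lemma okPq_shift: "okPq P q \<Longrightarrow> okPq (\<lambda>t. P (Suc t)) (\<lambda>t. q (Suc t))"
  by (simp add: okPq_def)

definition DPclaim :: "nat \<Rightarrow> real \<Rightarrow> (real^'n::finite \<Rightarrow> real) \<Rightarrow> ('f::finite \<Rightarrow> real) \<Rightarrow> ('act::finite \<Rightarrow> real) \<Rightarrow> ('m::finite \<Rightarrow> real) \<Rightarrow> bool" where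
  "DPclaim T dummy \<sigma>T gT dA dM \<longleftrightarrow> (\<forall>(A :: nat \<Rightarrow> real^'n^'n) (B :: nat \<Rightarrow> real^'m^'n)
     (P :: nat \<Rightarrow> 'act \<Rightarrow> 'f \<Rightarrow> 'f \<Rightarrow> real) q \<sigma> g u pj (W :: nat \<Rightarrow> real^'n \<Rightarrow> 'f \<Rightarrow> real) x s.
     (\<forall>t<T. \<forall>x s u. pj t x s u \<in> prob_simplex) \<and> okPq P q \<and> (\<forall>x s. W T x s = \<sigma>T x - gT s) \<longrightarrow>
     ((\<forall>t<T. \<forall>x s. ip (pj t x s (u t x s)) (stage_vec A B P q \<sigma> g t (W (Suc t)) x s (u t x s)) \<le> W t x s)
        \<longrightarrow> expected_payoff T A B P q \<sigma> \<sigma>T g gT x s u pj \<le> W 0 x s) \<and>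
     ((\<forall>t<T. \<forall>x s. ip (pj t x s (u t x s)) (stage_vec A B P q \<sigma> g t (W (Suc t)) x s (u t x s)) \<ge> W t x s)
        \<longrightarrow> expected_payoff T A B P q \<sigma> \<sigma>T g gT x s u pj \<ge> W 0 x s))"

lemma stage_vec_shift:
  "stage_vec (\<lambda>t. A (Suc t)) (\<lambda>t. B (Suc t)) (\<lambda>t. P (Suc t)) (\<lambda>t. q (Suc t)) (\<lambda>t. \<sigma> (Suc t)) (\<lambda>t. g (Suc t)) t
   = stage_vec A B P q \<sigma> g (Suc t)"
  by (intro ext) (simp add: stage_vec_def)

lemma DP_aux:
  fixes dA :: "'act::finite \<Rightarrow> real" and dM :: "'m::finite \<Rightarrow> real" and \<sigma>T :: "real^'n::finite \<Rightarrow> real" and gT :: "'f::finite \<Rightarrow> real"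
  shows "DPclaim T dummy \<sigma>T gT dA dM"
proof (induction T)
  case 0
  then show ?case by (simp add: exp_base DPclaim_def)
next
  case (Suc T)
  show ?case
    unfolding DPclaim_def
  proof (intro allI impI)
    fix A :: "nat \<Rightarrow> real^'n::finite^'n" and B :: "nat \<Rightarrow> real^'m::finite^'n"
      and P :: "nat \<Rightarrow> 'act::finite \<Rightarrow> 'f::finite \<Rightarrow> 'f \<Rightarrow> real" and q :: "nat \<Rightarrow> 'f \<Rightarrow> real"
      and \<sigma> :: "nat \<Rightarrow> real^'n \<Rightarrow> real^'m \<Rightarrow> real" and g :: "nat \<Rightarrow> 'act \<Rightarrow> 'f \<Rightarrow> real"
      and u :: "nat \<Rightarrow> real^'n \<Rightarrow> 'f \<Rightarrow> real^'m" and pj :: "nat \<Rightarrow> real^'n \<Rightarrow> 'f \<Rightarrow> real^'m \<Rightarrow> 'act \<Rightarrow> real"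
      and W :: "nat \<Rightarrow> real^'n \<Rightarrow> 'f \<Rightarrow> real" and x :: "real^'n" and s :: 'f
    assume H: "(\<forall>t<Suc T. \<forall>x s u. pj t x s u \<in> prob_simplex) \<and> okPq P q \<and> (\<forall>x s. W (Suc T) x s = \<sigma>T x - gT s)"
    then have strats: "\<forall>t<Suc T. \<forall>x s u. pj t x s u \<in> prob_simplex" and ok: "okPq P q"
      and termW: "\<forall>x s. W (Suc T) x s = \<sigma>T x - gT s" by auto
    have P_nonneg: "\<And>t a j i. 0 \<le> P t a j i" and P_stoch: "\<And>t a j. (\<Sum>i\<in>UNIV. P t a j i) = 1"
      and q_range: "\<And>t i. 0 \<le> q t i \<and> q t i \<le> 1" using ok by (auto simp: okPq_def)
    let ?E = "\<lambda>x s. expected_payoff T (\<lambda>t. A (Suc t)) (\<lambda>t. B (Suc t)) (\<lambda>t. P (Suc t)) (\<lambda>t. q (Suc t))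
          (\<lambda>t. \<sigma> (Suc t)) \<sigma>T (\<lambda>t. g (Suc t)) gT x s (\<lambda>t. u (Suc t)) (\<lambda>t. pj (Suc t))"
    have hyp: "(\<forall>t<T. \<forall>x s u. pj (Suc t) x s u \<in> prob_simplex) \<and> okPq (\<lambda>t. P (Suc t)) (\<lambda>t. q (Suc t))
        \<and> (\<forall>x s. W (Suc T) x s = \<sigma>T x - gT s)"
      using strats ok termW okPq_shift by auto
    note IH = Suc.IH[unfolded DPclaim_def, rule_format, where A = "\<lambda>t. A (Suc t)" and B = "\<lambda>t. B (Suc t)" and P = "\<lambda>t. P (Suc t)" and q = "\<lambda>t. q (Suc t)"
          and \<sigma> = "\<lambda>t. \<sigma> (Suc t)" and g = "\<lambda>t. g (Suc t)" and u = "\<lambda>t. u (Suc t)" and pj = "\<lambda>t. pj (Suc t)" and W = "\<lambda>t. W (Suc t)", simplified, OF hyp]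
    have ex: "expected_payoff (Suc T) A B P q \<sigma> \<sigma>T g gT x s u pj =
        ip (pj 0 x s (u 0 x s)) (stage_vec A B P q \<sigma> g 0 ?E x s (u 0 x s))"
      by (rule exp_step) (use strats P_stoch in auto)
    have pj0: "pj 0 x s (u 0 x s) \<in> prob_simplex" using strats by auto
    show "((\<forall>t<Suc T. \<forall>x s. ip (pj t x s (u t x s)) (stage_vec A B P q \<sigma> g t (W (Suc t)) x s (u t x s)) \<le> W t x s)
        \<longrightarrow> expected_payoff (Suc T) A B P q \<sigma> \<sigma>T g gT x s u pj \<le> W 0 x s) \<and>
     ((\<forall>t<Suc T. \<forall>x s. ip (pj t x s (u t x s)) (stage_vec A B P q \<sigma> g t (W (Suc t)) x s (u t x s)) \<ge> W t x s)
        \<longrightarrow> expected_payoff (Suc T) A B P q \<sigma> \<sigma>T g gT x s u pj \<ge> W 0 x s)"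
    proof (intro conjI impI)
      assume st: "\<forall>t<Suc T. \<forall>x s. ip (pj t x s (u t x s)) (stage_vec A B P q \<sigma> g t (W (Suc t)) x s (u t x s)) \<le> W t x s"
      have st': "\<forall>t<T. \<forall>x s. ip (pj (Suc t) x s (u (Suc t) x s)) (stage_vec (\<lambda>t. A (Suc t)) (\<lambda>t. B (Suc t)) (\<lambda>t. P (Suc t)) (\<lambda>t. q (Suc t))
          (\<lambda>t. \<sigma> (Suc t)) (\<lambda>t. g (Suc t)) t (W (Suc (Suc t))) x s (u (Suc t) x s)) \<le> W (Suc t) x s"
        unfolding stage_vec_shift using st by auto
      have le: "?E x' s' \<le> W (Suc 0) x' s'" for x' s'
        using IH st' by blast
      have "expected_payoff (Suc T) A B P q \<sigma> \<sigma>T g gT x s u pj \<le>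
            ip (pj 0 x s (u 0 x s)) (stage_vec A B P q \<sigma> g 0 (W (Suc 0)) x s (u 0 x s))"
        unfolding ex by (rule ip_mono[OF pj0], rule stage_vec_mono[OF P_nonneg q_range le])
      also have "\<dots> \<le> W 0 x s" using st by auto
      finally show "expected_payoff (Suc T) A B P q \<sigma> \<sigma>T g gT x s u pj \<le> W 0 x s" .
    next
      assume st: "\<forall>t<Suc T. \<forall>x s. ip (pj t x s (u t x s)) (stage_vec A B P q \<sigma> g t (W (Suc t)) x s (u t x s)) \<ge> W t x s"
      have st': "\<forall>t<T. \<forall>x s. ip (pj (Suc t) x s (u (Suc t) x s)) (stage_vec (\<lambda>t. A (Suc t)) (\<lambda>t. B (Suc t)) (\<lambda>t. P (Suc t)) (\<lambda>t. q (Suc t))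
          (\<lambda>t. \<sigma> (Suc t)) (\<lambda>t. g (Suc t)) t (W (Suc (Suc t))) x s (u (Suc t) x s)) \<ge> W (Suc t) x s"
        unfolding stage_vec_shift using st by auto
      have ge: "W (Suc 0) x' s' \<le> ?E x' s'" for x' s'
        using IH st' by blast
      have "W 0 x s \<le> ip (pj 0 x s (u 0 x s)) (stage_vec A B P q \<sigma> g 0 (W (Suc 0)) x s (u 0 x s))"
        using st by auto
      also have "\<dots> \<le> expected_payoff (Suc T) A B P q \<sigma> \<sigma>T g gT x s u pj"
        unfolding ex by (rule ip_mono[OF pj0], rule stage_vec_mono[OF P_nonneg q_range ge])
      finally show "W 0 x s \<le> expected_payoff (Suc T) A B P q \<sigma> \<sigma>T g gT x s u pj" .
    qed
  qed
qed



lemma vertex_simplex: "(\<lambda>b. if b = a then 1 else 0) \<in> (prob_simplex :: ('act::finite \<Rightarrow> real) set)"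
  by (simp add: prob_simplex_def)

lemma ip_vertex: "ip (\<lambda>b. if b = a then 1 else 0) f = f a"
proof -
  have "(\<Sum>b\<in>UNIV. (if b = a then 1 else 0) * f b) = (\<Sum>b\<in>UNIV. if b = a then f b else 0)"
    by (rule sum.cong) auto
  then show ?thesis by (simp add: ip_def)
qed

lemma ip_le_Max:
  fixes f :: "'act::finite \<Rightarrow> real"
  assumes "p \<in> prob_simplex"
  shows "ip p f \<le> Max (range f)"
proof -
  have "ip p f \<le> (\<Sum>a\<in>UNIV. p a * Max (range f))"
    unfolding ip_def using assms
    by (intro sum_mono mult_left_mono) (auto simp: prob_simplex_def)
  also have "\<dots> = Max (range f)"
    using assms by (simp add: sum_distrib_right[symmetric] prob_simplex_def)
  finally show ?thesis .
qed

lemma Max_range_attained: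
  fixes f :: "'act::finite \<Rightarrow> real"
  obtains a where "Max (range f) = f a"
proof -
  have "Max (range f) \<in> range f" by (rule Max_in) auto
  then obtain a where "Max (range f) = f a" by (rule rangeE) simp
  then show ?thesis by (rule that)
qed

lemma SUP_simplex:
  fixes f :: "'act::finite \<Rightarrow> real"
  shows "(SUP p\<in>prob_simplex. ereal (ip p f)) = ereal (Max (range f))"
proof (rule antisym)
  show "(SUP p\<in>prob_simplex. ereal (ip p f)) \<le> ereal (Max (range f))"
    by (rule SUP_least) (simp add: ip_le_Max)
  obtain a where a: "Max (range f) = f a" by (rule Max_range_attained)
  have "ereal (ip (\<lambda>b. if b = a then 1 else 0) f) \<le> (SUP p\<in>prob_simplex. ereal (ip p f))"
    by (rule SUP_upper) (rule vertex_simplex)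
  then show "ereal (Max (range f)) \<le> (SUP p\<in>prob_simplex. ereal (ip p f))"
    by (simp add: a ip_vertex)
qed

lemma INF_attained:
  assumes "\<And>u. h us \<le> h u"
  shows "(INF u\<in>UNIV. ereal (h u)) = ereal (h us)"
proof (rule antisym)
  show "(INF u\<in>UNIV. ereal (h u)) \<le> ereal (h us)" by (rule INF_lower) simp
  show "ereal (h us) \<le> (INF u\<in>UNIV. ereal (h u))" by (rule INF_greatest) (simp add: assms)
qed

lemma continuous_on_Max_fin:
  fixes F :: "'a::topological_space \<Rightarrow> 'b \<Rightarrow> real"
  assumes "finite A" "A \<noteq> {}" "\<And>a. a \<in> A \<Longrightarrow> continuous_on S (\<lambda>x. F x a)"
  shows "continuous_on S (\<lambda>x. Max ((F x) ` A))"
  using assms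
proof (induction A rule: finite_ne_induct)
  case (singleton a)
  then show ?case by simp
next
  case (insert a A)
  have "(\<lambda>x. Max ((F x) ` insert a A)) = (\<lambda>x. max (F x a) (Max ((F x) ` A)))"
    using insert.hyps by (simp add: Max_insert)
  then show ?case
    using insert by (auto intro!: continuous_on_max)
qed

lemma min_exists:
  fixes h :: "'b::euclidean_space \<Rightarrow> real"
  assumes cont: "continuous_on UNIV h"
    and coer: "\<And>M. \<exists>R. \<forall>u. R < norm u \<longrightarrow> M < h u"
  shows "\<exists>us. \<forall>u. h us \<le> h u"
proof -
  obtain R where R: "\<And>u. R < norm u \<Longrightarrow> h 0 < h u" using coer[of "h 0"] by auto
  let ?K = "cball (0::'b) (max R 0)"
  have "\<exists>x\<in>?K. \<forall>y\<in>?K. h x \<le> h y"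
    by (rule continuous_attains_inf) (auto intro: continuous_on_subset[OF cont])
  then obtain us where us: "us \<in> ?K" "\<And>y. y \<in> ?K \<Longrightarrow> h us \<le> h y" by blast
  have "h us \<le> h u" for u
  proof (cases "u \<in> ?K")
    case True then show ?thesis by (rule us(2))
  next
    case False
    then have "R < norm u" by auto
    then have "h 0 < h u" by (rule R)
    moreover have "h us \<le> h 0" by (rule us(2)) simp
    ultimately show ?thesis by simp
  qed
  then show ?thesis by blast
qed


lemma cvxD:
  assumes "convex_on UNIV f" "0 \<le> l" "0 \<le> m" "l + m = 1"
  shows "f (l *\<^sub>R x + m *\<^sub>R y) \<le> l * f x + m * f y"
  using assms by (simp add: convex_on_def)

lemma cvxI:
  assumes "\<And>x y l m. 0 \<le> l \<Longrightarrow> 0 \<le> m \<Longrightarrow> l + m = 1 \<Longrightarrow> f (l *\<^sub>R x + m *\<^sub>R y) \<le> l * f x + m * f y"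
  shows "convex_on UNIV f"
  using assms by (simp add: convex_on_def)

lemma sep:
  fixes F :: "'b::real_vector \<Rightarrow> 'act::finite \<Rightarrow> real"
  assumes conv: "\<And>a. convex_on UNIV (\<lambda>u. F u a)"
    and minv: "\<And>u. v \<le> Max (range (F u))"
  shows "\<exists>p\<in>prob_simplex. \<forall>u. v \<le> ip p (F u)"
proof -
  define C where "C = {z::real^'act. \<exists>u. \<forall>a. F u a \<le> z$a}"
  define D where "D = {z::real^'act. \<forall>a. z$a < v}"
  have inner_eq: "inner c z = (\<Sum>a\<in>UNIV. c$a * z$a)" for c z :: "real^'act"
    by (simp add: inner_vec_def)
  have convC: "convex C"
  proof (rule convexI)
    fix x y :: "real^'act" and l m :: real
    assume "x \<in> C" "y \<in> C" and lm: "0 \<le> l" "0 \<le> m" "l + m = 1"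
    then obtain ux uy where ux: "\<And>a. F ux a \<le> x$a" and uy: "\<And>a. F uy a \<le> y$a"
      unfolding C_def by blast
    have "F (l *\<^sub>R ux + m *\<^sub>R uy) a \<le> (l *\<^sub>R x + m *\<^sub>R y)$a" for a
    proof -
      have "F (l *\<^sub>R ux + m *\<^sub>R uy) a \<le> l * F ux a + m * F uy a"
        using cvxD[OF conv lm] .
      also have "\<dots> \<le> l * x$a + m * y$a"
        using ux[of a] uy[of a] lm by (intro add_mono mult_left_mono) auto
      finally show ?thesis by simp
    qed
    then show "l *\<^sub>R x + m *\<^sub>R y \<in> C" unfolding C_def by blast
  qed
  have convD: "convex D"
  proof (rule convexI)
    fix x y :: "real^'act" and l m :: real
    assume "x \<in> D" "y \<in> D" and lm: "0 \<le> l" "0 \<le> m" "l + m = 1"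
    then have x: "\<And>a. x$a < v" and y: "\<And>a. y$a < v" unfolding D_def by auto
    have "(l *\<^sub>R x + m *\<^sub>R y)$a < v" for a
    proof (cases "l = 0")
      case True then show ?thesis using lm y[of a] by simp
    next
      case False
      then have "l * x$a < l * v" using lm x[of a] by simp
      moreover have "m * y$a \<le> m * v" using lm y[of a] by (intro mult_left_mono) auto
      ultimately have "l * x$a + m * y$a < l * v + m * v" by simp
      also have "\<dots> = v" using lm by (simp add: distrib_right[symmetric])
      finally show ?thesis by simp
    qed
    then show "l *\<^sub>R x + m *\<^sub>R y \<in> D" unfolding D_def by blast
  qed
  define z0 where "z0 = (\<chi> a. F 0 a)"
  have z0C: "z0 \<in> C" unfolding C_def z0_def by auto
  have DnE: "(\<chi> a. v - 1) \<in> D" unfolding D_def by simp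
  have disj: "D \<inter> C = {}"
  proof (rule ccontr)
    assume "D \<inter> C \<noteq> {}"
    then obtain z u where "\<And>a. z$a < v" "\<And>a. F u a \<le> z$a" unfolding C_def D_def by blast
    moreover obtain a where "Max (range (F u)) = F u a" by (rule Max_range_attained)
    ultimately have "Max (range (F u)) < v" by (metis le_less_trans)
    with minv[of u] show False by simp
  qed
  obtain c b where c0: "c \<noteq> 0" and cD: "\<And>z. z \<in> D \<Longrightarrow> inner c z \<le> b" and cC: "\<And>z. z \<in> C \<Longrightarrow> inner c z \<ge> b"
    using separating_hyperplane_sets[OF convD convC _ _ disj] DnE z0C by blast
  have cnn: "c$a \<ge> 0" for a
  proof (rule ccontr)
    assume neg: "\<not> c$a \<ge> 0"
    define t where "t = (inner c z0 - b + 1) / (- c$a)"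
    have "inner c z0 \<ge> b" by (rule cC[OF z0C])
    then have t0: "t \<ge> 0" using neg unfolding t_def by (intro divide_nonneg_pos) auto
    define z where "z = (\<chi> i. z0$i + (if i = a then t else 0))"
    have "z \<in> C" unfolding C_def z_def z0_def using t0 by (auto intro!: exI[of _ 0])
    then have "inner c z \<ge> b" by (rule cC)
    moreover have "inner c z = inner c z0 + t * c$a"
    proof -
      have "inner c z = (\<Sum>i\<in>UNIV. c$i * z0$i + (if i = a then t * c$a else 0))"
        unfolding inner_eq z_def by (rule sum.cong) (auto simp: algebra_simps)
      also have "\<dots> = inner c z0 + t * c$a"
        by (simp add: sum.distrib inner_eq)
      finally show ?thesis .
    qed
    moreover have "t * c$a = - (inner c z0 - b + 1)"
      using neg unfolding t_def by (simp add: field_simps)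
    ultimately show False by simp
  qed
  define S where "S = (\<Sum>a\<in>UNIV. c$a)"
  have Spos: "S > 0"
  proof -
    obtain a where "c$a \<noteq> 0" using c0 by (metis vec_eq_iff zero_index)
    then have "c$a > 0" using cnn[of a] by simp
    then show ?thesis unfolding S_def
      using cnn by (intro sum_pos2[where i = a]) auto
  qed
  have bS: "v * S \<le> b"
  proof (rule ccontr)
    assume "\<not> v * S \<le> b"
    define e where "e = (v * S - b) / (2 * S)"
    have e0: "e > 0" unfolding e_def using Spos \<open>\<not> v * S \<le> b\<close> by simp
    have "(\<chi> a. v - e) \<in> D" unfolding D_def using e0 by simp
    then have h0: "inner c (\<chi> a. v - e) \<le> b" by (rule cD)
    have h1: "inner c (\<chi> a. v - e) = (v - e) * S"
    proof -
      have "inner c (\<chi> a. v - e) = (\<Sum>a\<in>UNIV. (v - e) * c$a)"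
        unfolding inner_eq by (simp add: mult.commute)
      also have "\<dots> = (v - e) * S" unfolding S_def by (rule sum_distrib_left[symmetric])
      finally show ?thesis .
    qed
    have h2: "(v - e) * S = v * S - (v * S - b) / 2"
      unfolding e_def using Spos by (simp add: field_simps)
    have "(v - e) * S \<le> b" using h0 h1 by simp
    then have "v * S - (v * S - b) / 2 \<le> b" using h2 by simp
    then show False using \<open>\<not> v * S \<le> b\<close> by argo
  qed
  define p where "p = (\<lambda>a. c$a / S)"
  have "p \<in> prob_simplex"
    unfolding prob_simplex_def p_def using Spos cnn
    by (auto simp: sum_divide_distrib[symmetric] S_def)
  moreover have "v \<le> ip p (F u)" for u
  proof -
    have "(\<chi> a. F u a) \<in> C" unfolding C_def by auto
    then have "b \<le> inner c (\<chi> a. F u a)" by (rule cC)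
    then have "v * S \<le> (\<Sum>a\<in>UNIV. c$a * F u a)" using bS by (simp add: inner_eq)
    then have "v \<le> (\<Sum>a\<in>UNIV. c$a * F u a) / S" using Spos by (simp add: field_simps)
    also have "\<dots> = ip p (F u)"
      unfolding ip_def p_def by (simp add: sum_divide_distrib)
    finally show ?thesis .
  qed
  ultimately show ?thesis by blast
qed


definition GoodW :: "(real^'n::finite \<Rightarrow> 'f \<Rightarrow> real) \<Rightarrow> bool" where
  "GoodW W \<longleftrightarrow> (\<forall>i. convex_on UNIV (\<lambda>x. W x i)) \<and> (\<exists>L. \<forall>x i. L \<le> W x i)"

lemma GoodW_cont: "GoodW W \<Longrightarrow> continuous_on UNIV (\<lambda>x. W x i)"
  unfolding GoodW_def by (intro convex_on_continuous) auto

lemma affine_comb: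
  fixes A :: "real^'n::finite^'n" and B :: "real^'m::finite^'n"
  shows "A *v (l *\<^sub>R x + m *\<^sub>R y) + B *v (l *\<^sub>R u + m *\<^sub>R u') =
         l *\<^sub>R (A *v x + B *v u) + m *\<^sub>R (A *v y + B *v u')"
  by (simp add: algebra_simps)

lemma affine_comb0:
  fixes A :: "real^'n::finite^'n"
  shows "A *v (l *\<^sub>R x + m *\<^sub>R y) = l *\<^sub>R (A *v x) + m *\<^sub>R (A *v y)"
  by (simp add: algebra_simps)

lemma stage_jconv:
  fixes A :: "nat \<Rightarrow> real^'n::finite^'n" and B :: "nat \<Rightarrow> real^'m::finite^'n"
    and P :: "nat \<Rightarrow> 'act::finite \<Rightarrow> 'f::finite \<Rightarrow> 'f \<Rightarrow> real"
  assumes P_nonneg: "\<And>t a j i. 0 \<le> P t a j i"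
    and q_range: "\<And>t i. 0 \<le> q t i \<and> q t i \<le> 1"
    and hconv: "convex_on UNIV (\<lambda>(x, u). \<sigma> t x u)"
    and GW: "GoodW W"
    and lm: "0 \<le> l" "0 \<le> m" "l + m = 1"
  shows "stage_vec A B P q \<sigma> g t W (l *\<^sub>R x + m *\<^sub>R y) s (l *\<^sub>R u + m *\<^sub>R u') a \<le>
         l * stage_vec A B P q \<sigma> g t W x s u a + m * stage_vec A B P q \<sigma> g t W y s u' a"
proof -
  have Wc: "convex_on UNIV (\<lambda>x. W x i)" for i using GW by (simp add: GoodW_def)
  have s1: "\<sigma> t (l *\<^sub>R x + m *\<^sub>R y) (l *\<^sub>R u + m *\<^sub>R u') \<le> l * \<sigma> t x u + m * \<sigma> t y u'"
    using cvxD[OF hconv lm, of "(x, u)" "(y, u')"] by simp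
  have s2: "- g t a s = l * (- g t a s) + m * (- g t a s)"
  proof -
    have "l * (- g t a s) + m * (- g t a s) = (l + m) * (- g t a s)" by (simp only: distrib_right)
    then show ?thesis using lm(3) by simp
  qed
  let ?T = "\<lambda>x u i. P t a s i * (q t i * W (A t *v x + B t *v u) i + (1 - q t i) * W (A t *v x) i)"
  have s3: "?T (l *\<^sub>R x + m *\<^sub>R y) (l *\<^sub>R u + m *\<^sub>R u') i \<le> l * ?T x u i + m * ?T y u' i" for i
  proof -
    have w1: "W (A t *v (l *\<^sub>R x + m *\<^sub>R y) + B t *v (l *\<^sub>R u + m *\<^sub>R u')) i \<le>
        l * W (A t *v x + B t *v u) i + m * W (A t *v y + B t *v u') i"
      unfolding affine_comb by (rule cvxD[OF Wc lm])
    have w0: "W (A t *v (l *\<^sub>R x + m *\<^sub>R y)) i \<le> l * W (A t *v x) i + m * W (A t *v y) i"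
      unfolding affine_comb0 by (rule cvxD[OF Wc lm])
    have q0: "0 \<le> q t i" "0 \<le> 1 - q t i" using q_range[of t i] by auto
    have "q t i * W (A t *v (l *\<^sub>R x + m *\<^sub>R y) + B t *v (l *\<^sub>R u + m *\<^sub>R u')) i +
          (1 - q t i) * W (A t *v (l *\<^sub>R x + m *\<^sub>R y)) i \<le>
          q t i * (l * W (A t *v x + B t *v u) i + m * W (A t *v y + B t *v u') i) +
          (1 - q t i) * (l * W (A t *v x) i + m * W (A t *v y) i)"
      using w1 w0 q0 by (intro add_mono mult_left_mono) auto
    then have "?T (l *\<^sub>R x + m *\<^sub>R y) (l *\<^sub>R u + m *\<^sub>R u') i \<le>
        P t a s i * (q t i * (l * W (A t *v x + B t *v u) i + m * W (A t *v y + B t *v u') i) +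
          (1 - q t i) * (l * W (A t *v x) i + m * W (A t *v y) i))"
      using P_nonneg by (intro mult_left_mono) auto
    also have "\<dots> = l * ?T x u i + m * ?T y u' i" by (simp add: algebra_simps)
    finally show ?thesis .
  qed
  have "(\<Sum>i\<in>UNIV. ?T (l *\<^sub>R x + m *\<^sub>R y) (l *\<^sub>R u + m *\<^sub>R u') i) \<le> (\<Sum>i\<in>UNIV. l * ?T x u i + m * ?T y u' i)"
    by (rule sum_mono) (rule s3)
  also have "\<dots> = l * (\<Sum>i\<in>UNIV. ?T x u i) + m * (\<Sum>i\<in>UNIV. ?T y u' i)"
    by (simp add: sum.distrib sum_distrib_left)
  finally have s4: "(\<Sum>i\<in>UNIV. ?T (l *\<^sub>R x + m *\<^sub>R y) (l *\<^sub>R u + m *\<^sub>R u') i) \<le>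
      l * (\<Sum>i\<in>UNIV. ?T x u i) + m * (\<Sum>i\<in>UNIV. ?T y u' i)" .
  show ?thesis
    unfolding stage_vec_def using s1 s2 s4 by (simp add: algebra_simps)
qed


lemma stage_cont:
  fixes A :: "nat \<Rightarrow> real^'n::finite^'n" and B :: "nat \<Rightarrow> real^'m::finite^'n"
    and P :: "nat \<Rightarrow> 'act::finite \<Rightarrow> 'f::finite \<Rightarrow> 'f \<Rightarrow> real"
  assumes hcu: "continuous_on UNIV (\<sigma> t x)"
    and GW: "GoodW W"
  shows "continuous_on UNIV (\<lambda>u. stage_vec A B P q \<sigma> g t W x s u a)"
proof -
  have Wc: "continuous_on UNIV (\<lambda>u. W (A t *v x + B t *v u) i)" for i
  proof (rule continuous_on_compose2[OF GoodW_cont[OF GW, of i]])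
    show "continuous_on UNIV (\<lambda>u. A t *v x + B t *v u)"
      by (intro continuous_intros bounded_linear.continuous_on[OF matrix_vector_mul_bounded_linear])
  qed auto
  show ?thesis
    unfolding stage_vec_def
    by (intro continuous_intros hcu Wc)
qed

lemma stage_lower:
  fixes A :: "nat \<Rightarrow> real^'n::finite^'n" and B :: "nat \<Rightarrow> real^'m::finite^'n"
    and P :: "nat \<Rightarrow> 'act::finite \<Rightarrow> 'f::finite \<Rightarrow> 'f \<Rightarrow> real"
  assumes P_nonneg: "\<And>t a j i. 0 \<le> P t a j i"
    and P_stoch: "\<And>t a j. (\<Sum>i\<in>UNIV. P t a j i) = 1"
    and q_range: "\<And>t i. 0 \<le> q t i \<and> q t i \<le> 1"
    and GW: "GoodW W"
  shows "\<exists>K. \<forall>x s u a. \<sigma> t x u + K \<le> stage_vec A B P q \<sigma> g t W x s u a"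
proof -
  obtain L where L: "\<And>x i. L \<le> W x i" using GW by (auto simp: GoodW_def)
  define G where "G = Max (range (\<lambda>(a, s). g t a s))"
  have G: "g t a s \<le> G" for a s unfolding G_def by (rule Max_ge) auto
  have "\<sigma> t x u + (L - G) \<le> stage_vec A B P q \<sigma> g t W x s u a" for x s u a
  proof -
    have "(\<Sum>i\<in>UNIV. P t a s i * L) \<le>
          (\<Sum>i\<in>UNIV. P t a s i * (q t i * W (A t *v x + B t *v u) i + (1 - q t i) * W (A t *v x) i))"
    proof (rule sum_mono, rule mult_left_mono)
      fix i
      have "q t i * L + (1 - q t i) * L \<le> q t i * W (A t *v x + B t *v u) i + (1 - q t i) * W (A t *v x) i"
        using q_range[of t i] L by (intro add_mono mult_left_mono) auto
      then show "L \<le> q t i * W (A t *v x + B t *v u) i + (1 - q t i) * W (A t *v x) i"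
        by (simp add: algebra_simps)
      show "0 \<le> P t a s i" by (rule P_nonneg)
    qed
    moreover have "(\<Sum>i\<in>UNIV. P t a s i * L) = L"
      using P_stoch by (simp add: sum_distrib_right[symmetric])
    ultimately show ?thesis unfolding stage_vec_def using G[of a s] by simp
  qed
  then show ?thesis by blast
qed

lemma Max_range_ge: "f a \<le> Max (range (f :: 'a::finite \<Rightarrow> real))"
  by (rule Max_ge) auto

lemma stage_coercive:
  fixes A :: "nat \<Rightarrow> real^'n::finite^'n" and B :: "nat \<Rightarrow> real^'m::finite^'n"
    and P :: "nat \<Rightarrow> 'act::finite \<Rightarrow> 'f::finite \<Rightarrow> 'f \<Rightarrow> real"
  assumes K: "\<forall>x s u a. \<sigma> t x u + K \<le> stage_vec A B P q \<sigma> g t W x s u a"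
    and H1: "\<exists>(e::real) (d::real) (\<alpha>::real \<Rightarrow> real) (\<beta>::real \<Rightarrow> real).
               filterlim \<alpha> at_top at_top \<and> filterlim \<beta> at_top at_top \<and>
               (\<forall>y\<ge>0. \<alpha> y \<ge> e) \<and> (\<forall>y\<ge>0. \<beta> y \<ge> d) \<and>
               (\<forall>x u. \<sigma> t x u \<ge> \<alpha> (norm u) + \<beta> (norm x))"
  shows "\<exists>R. \<forall>u. R < norm u \<longrightarrow> M < Max (range (stage_vec A B P q \<sigma> g t W x s u))"
proof -
  obtain \<alpha> \<beta> :: "real \<Rightarrow> real" where al: "filterlim \<alpha> at_top at_top"
    and sb: "\<And>x u. \<sigma> t x u \<ge> \<alpha> (norm u) + \<beta> (norm x)" using H1 by blast
  have "eventually (\<lambda>y. M - \<beta> (norm x) - K + 1 \<le> \<alpha> y) at_top"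
    using al by (simp add: filterlim_at_top)
  then obtain N where N: "\<And>y. N \<le> y \<Longrightarrow> M - \<beta> (norm x) - K + 1 \<le> \<alpha> y"
    by (auto simp: eventually_at_top_linorder)
  have "M < Max (range (stage_vec A B P q \<sigma> g t W x s u))" if "N < norm u" for u
  proof -
    obtain a :: 'act where True by simp
    have "M - \<beta> (norm x) - K + 1 \<le> \<alpha> (norm u)" using N that by simp
    then have "M < \<sigma> t x u + K" using sb[where x=x and u=u] by simp
    also have "\<dots> \<le> stage_vec A B P q \<sigma> g t W x s u a" using K by simp
    also have "\<dots> \<le> Max (range (stage_vec A B P q \<sigma> g t W x s u))" by (rule Max_range_ge)
    finally show ?thesis .
  qed
  then show ?thesis by blast
qed


lemma stage_main:
  fixes A :: "nat \<Rightarrow> real^'n::finite^'n" and B :: "nat \<Rightarrow> real^'m::finite^'n"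
    and P :: "nat \<Rightarrow> 'act::finite \<Rightarrow> 'f::finite \<Rightarrow> 'f \<Rightarrow> real"
    and W :: "real^'n \<Rightarrow> 'f \<Rightarrow> real" and g :: "nat \<Rightarrow> 'act \<Rightarrow> 'f \<Rightarrow> real"
  assumes P_nonneg: "\<And>t a j i. 0 \<le> P t a j i"
    and P_stoch: "\<And>t a j. (\<Sum>i\<in>UNIV. P t a j i) = 1"
    and q_range: "\<And>t i. 0 \<le> q t i \<and> q t i \<le> 1"
    and H1: "\<exists>(e::real) (d::real) (\<alpha>::real \<Rightarrow> real) (\<beta>::real \<Rightarrow> real).
               filterlim \<alpha> at_top at_top \<and> filterlim \<beta> at_top at_top \<and>
               (\<forall>y\<ge>0. \<alpha> y \<ge> e) \<and> (\<forall>y\<ge>0. \<beta> y \<ge> d) \<and>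
               (\<forall>x u. \<sigma> t x u \<ge> \<alpha> (norm u) + \<beta> (norm x))"
    and H2: "convex_on UNIV (\<lambda>(x, u). \<sigma> t x u)"
    and hcu: "\<And>x. continuous_on UNIV (\<sigma> t x)"
    and snn: "\<And>x u. 0 \<le> \<sigma> t x u"
    and GW: "GoodW W"
  defines "F \<equiv> stage_vec A B P q \<sigma> g t W"
  shows "\<forall>x s. \<exists>us. \<forall>u. Max (range (F x s us)) \<le> Max (range (F x s u))"
    and "GoodW (\<lambda>x s. Max (range (F x s (SOME us. \<forall>u. Max (range (F x s us)) \<le> Max (range (F x s u))))))"
    and "\<And>x s us. (\<forall>u. Max (range (F x s us)) \<le> Max (range (F x s u))) \<Longrightarrow>
           \<exists>p\<in>prob_simplex. \<forall>u. Max (range (F x s us)) \<le> ip p (F x s u)"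
proof -
  obtain K where K: "\<forall>x s u a. \<sigma> t x u + K \<le> F x s u a"
    using stage_lower[where P=P and q=q and W=W and A=A and B=B and \<sigma>=\<sigma> and g=g and t=t, OF P_nonneg P_stoch q_range GW] unfolding F_def by blast
  have jc: "F (l *\<^sub>R x + m *\<^sub>R y) s (l *\<^sub>R u + m *\<^sub>R u') a \<le> l * F x s u a + m * F y s u' a"
    if "0 \<le> l" "0 \<le> m" "l + m = 1" for l m x y s u u' a
    unfolding F_def by (rule stage_jconv[where P=P and q=q and W=W and A=A and B=B and \<sigma>=\<sigma> and g=g and t=t, OF P_nonneg q_range H2 GW that])
  show ex: "\<forall>x s. \<exists>us. \<forall>u. Max (range (F x s us)) \<le> Max (range (F x s u))"
  proof (intro allI)
    fix x s
    show "\<exists>us. \<forall>u. Max (range (F x s us)) \<le> Max (range (F x s u))"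
    proof (rule min_exists)
      show "continuous_on UNIV (\<lambda>u. Max (range (F x s u)))"
        unfolding F_def by (rule continuous_on_Max_fin) (auto intro: stage_cont[where \<sigma>=\<sigma> and t=t and W=W, OF hcu GW])
      show "\<exists>R. \<forall>u. R < norm u \<longrightarrow> M < Max (range (F x s u))" for M
        unfolding F_def by (rule stage_coercive[OF K[unfolded F_def] H1])
    qed
  qed
  define us where "us = (\<lambda>x s. SOME us. \<forall>u. Max (range (F x s us)) \<le> Max (range (F x s u)))"
  have us: "Max (range (F x s (us x s))) \<le> Max (range (F x s u))" for x s u
    using someI_ex[OF ex[rule_format, of x s]] unfolding us_def by blast
  have GU: "GoodW (\<lambda>x s. Max (range (F x s (us x s))))"
    unfolding GoodW_def
  proof (intro conjI allI)
    fix s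
    have cv: "Max (range (F (l *\<^sub>R x + m *\<^sub>R y) s (us (l *\<^sub>R x + m *\<^sub>R y) s)))
          \<le> l * Max (range (F x s (us x s))) + m * Max (range (F y s (us y s)))"
      if lm: "0 \<le> l" "0 \<le> m" "l + m = 1" for x y :: "real^'n" and l m :: real
    proof -
      have "Max (range (F (l *\<^sub>R x + m *\<^sub>R y) s (us (l *\<^sub>R x + m *\<^sub>R y) s)))
          \<le> Max (range (F (l *\<^sub>R x + m *\<^sub>R y) s (l *\<^sub>R us x s + m *\<^sub>R us y s)))" by (rule us)
      also have "\<dots> \<le> l * Max (range (F x s (us x s))) + m * Max (range (F y s (us y s)))"
      proof (rule Max.boundedI, simp, simp)
        fix z assume "z \<in> range (F (l *\<^sub>R x + m *\<^sub>R y) s (l *\<^sub>R us x s + m *\<^sub>R us y s))"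
        then obtain a where z: "z = F (l *\<^sub>R x + m *\<^sub>R y) s (l *\<^sub>R us x s + m *\<^sub>R us y s) a" by blast
        have "z \<le> l * F x s (us x s) a + m * F y s (us y s) a" unfolding z by (rule jc[OF lm])
        also have "\<dots> \<le> l * Max (range (F x s (us x s))) + m * Max (range (F y s (us y s)))"
          using lm by (intro add_mono mult_left_mono Max_range_ge) auto
        finally show "z \<le> l * Max (range (F x s (us x s))) + m * Max (range (F y s (us y s)))" .
      qed
      finally show ?thesis .
    qed
    show "convex_on UNIV (\<lambda>x. Max (range (F x s (us x s))))"
      by (rule cvxI) (rule cv)
  next
    obtain a :: 'act where True by simp
    have "K \<le> Max (range (F x i (us x i)))" for x i
    proof -
      have "K \<le> \<sigma> t x (us x i) + K" using snn by simp
      also have "\<dots> \<le> F x i (us x i) a" using K by simp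
      also have "\<dots> \<le> Max (range (F x i (us x i)))" by (rule Max_range_ge)
      finally show ?thesis .
    qed
    then show "\<exists>L. \<forall>x i. L \<le> Max (range (F x i (us x i)))" by blast
  qed
  then show "GoodW (\<lambda>x s. Max (range (F x s (SOME us. \<forall>u. Max (range (F x s us)) \<le> Max (range (F x s u))))))"
    unfolding us_def .
  show "\<exists>p\<in>prob_simplex. \<forall>u. Max (range (F x s us)) \<le> ip p (F x s u)"
    if "\<forall>u. Max (range (F x s us)) \<le> Max (range (F x s u))" for x s us
  proof (rule sep)
    show "convex_on UNIV (\<lambda>u. F x s u a)" for a
    proof (rule cvxI)
      fix u u' :: "real^'m" and l m :: real
      assume lm: "0 \<le> l" "0 \<le> m" "l + m = 1"
      have "F x s (l *\<^sub>R u + m *\<^sub>R u') a = F (l *\<^sub>R x + m *\<^sub>R x) s (l *\<^sub>R u + m *\<^sub>R u') a"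
        using lm by (simp add: scaleR_left_distrib[symmetric])
      also have "\<dots> \<le> l * F x s u a + m * F x s u' a" by (rule jc[OF lm])
      finally show "F x s (l *\<^sub>R u + m *\<^sub>R u') a \<le> l * F x s u a + m * F x s u' a" .
    qed
    show "Max (range (F x s us)) \<le> Max (range (F x s u))" for u using that by blast
  qed
qed



lemma Vfun_T: "Vfun T A B P q \<sigma> \<sigma>T g gT T x s = \<sigma>T x - gT s"
  by (simp add: Vfun_def)

lemma Vfun_step:
  assumes "t < T"
  shows "Vfun T A B P q \<sigma> \<sigma>T g gT t x s = real_of_ereal (INF u\<in>UNIV. SUP p\<in>prob_simplex.
        ereal (ip p (stage_vec A B P q \<sigma> g t (Vfun T A B P q \<sigma> \<sigma>T g gT (Suc t)) x s u)))"
proof -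
  have e1: "T - t = Suc (T - Suc t)" using assms by simp
  have e2: "T - Suc (T - Suc t) = t" using assms by simp
  show ?thesis
    unfolding Vfun_def e1 Vrec.simps(2) e2 ..
qed

lemma DP_le:
  fixes P :: "nat \<Rightarrow> 'act::finite \<Rightarrow> 'f::finite \<Rightarrow> 'f \<Rightarrow> real"
    and A :: "nat \<Rightarrow> real^'n::finite^'n" and B :: "nat \<Rightarrow> real^'m::finite^'n"
  assumes "\<forall>t<T. \<forall>x s u. pj t x s u \<in> prob_simplex" "okPq P q" "\<forall>x s. W T x s = \<sigma>T x - gT s"
   "\<forall>t<T. \<forall>x s. ip (pj t x s (u t x s)) (stage_vec A B P q \<sigma> g t (W (Suc t)) x s (u t x s)) \<le> W t x s"
  shows "expected_payoff T A B P q \<sigma> \<sigma>T g gT x s u pj \<le> W 0 x s"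
proof -
  have "DPclaim T 0 \<sigma>T gT (undefined :: 'act \<Rightarrow> real) (undefined :: 'm \<Rightarrow> real)" by (rule DP_aux)
  then show ?thesis unfolding DPclaim_def using assms by blast
qed

lemma DP_ge:
  fixes P :: "nat \<Rightarrow> 'act::finite \<Rightarrow> 'f::finite \<Rightarrow> 'f \<Rightarrow> real"
    and A :: "nat \<Rightarrow> real^'n::finite^'n" and B :: "nat \<Rightarrow> real^'m::finite^'n"
  assumes "\<forall>t<T. \<forall>x s u. pj t x s u \<in> prob_simplex" "okPq P q" "\<forall>x s. W T x s = \<sigma>T x - gT s"
   "\<forall>t<T. \<forall>x s. ip (pj t x s (u t x s)) (stage_vec A B P q \<sigma> g t (W (Suc t)) x s (u t x s)) \<ge> W t x s"
  shows "expected_payoff T A B P q \<sigma> \<sigma>T g gT x s u pj \<ge> W 0 x s"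
proof -
  have "DPclaim T 0 \<sigma>T gT (undefined :: 'act \<Rightarrow> real) (undefined :: 'm \<Rightarrow> real)" by (rule DP_aux)
  then show ?thesis unfolding DPclaim_def using assms by blast
qed

theorem theorem4:
  fixes T :: nat
    and A :: "nat \<Rightarrow> real^'n::finite^'n"
    and B :: "nat \<Rightarrow> real^'m::finite^'n"
    and P :: "nat \<Rightarrow> 'act::finite \<Rightarrow> 'f::finite \<Rightarrow> 'f \<Rightarrow> real"
    and q :: "nat \<Rightarrow> 'f \<Rightarrow> real"
    and \<sigma> :: "nat \<Rightarrow> real^'n \<Rightarrow> real^'m \<Rightarrow> real"
    and \<sigma>T :: "real^'n \<Rightarrow> real"
    and g :: "nat \<Rightarrow> 'act \<Rightarrow> 'f \<Rightarrow> real"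
    and gT :: "'f \<Rightarrow> real"
  assumes P_nonneg: "\<And>t a j i. 0 \<le> P t a j i"
    and P_stoch: "\<And>t a j. (\<Sum>i\<in>UNIV. P t a j i) = 1"
    and q_range: "\<And>t i. 0 \<le> q t i \<and> q t i \<le> 1"
    and \<sigma>_nonneg: "\<And>t x u. t < T \<Longrightarrow> 0 \<le> \<sigma> t x u"
    and \<sigma>T_nonneg: "\<And>x. 0 \<le> \<sigma>T x"
    and H1: "\<And>t. t < T \<Longrightarrow> \<exists>(e::real) (d::real) (\<alpha>::real \<Rightarrow> real) (\<beta>::real \<Rightarrow> real).
               filterlim \<alpha> at_top at_top \<and> filterlim \<beta> at_top at_top \<and>
               (\<forall>y\<ge>0. \<alpha> y \<ge> e) \<and> (\<forall>y\<ge>0. \<beta> y \<ge> d) \<and>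
               (\<forall>x u. \<sigma> t x u \<ge> \<alpha> (norm u) + \<beta> (norm x))"
    and H2: "\<And>t. t < T \<Longrightarrow> convex_on UNIV (\<lambda>(x, u). \<sigma> t x u)"
    and H3: "convex_on UNIV \<sigma>T"
    and H3': "\<exists>(d::real) (\<beta>::real \<Rightarrow> real).
               filterlim \<beta> at_top at_top \<and> (\<forall>y\<ge>0. \<beta> y \<ge> 0) \<and>
               (\<forall>y\<ge>0. \<beta> y \<ge> d) \<and> (\<forall>x. \<sigma>T x \<ge> \<beta> (norm x))"
    and H4: "continuous_on UNIV \<sigma>T"
    and H4x: "\<And>t x \<epsilon>. t < T \<Longrightarrow> \<epsilon> > 0 \<Longrightarrow>
               \<exists>\<delta>>0. \<forall>x' u. dist x' x < \<delta> \<longrightarrow> \<bar>\<sigma> t x' u - \<sigma> t x u\<bar> < \<epsilon>"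
    and H4u: "\<And>t x. t < T \<Longrightarrow> continuous_on UNIV (\<sigma> t x)"
  shows
    "(\<forall>t<T. \<forall>x s.
        let \<V> = (\<lambda>u. stage_vec A B P q \<sigma> g t (Vfun T A B P q \<sigma> \<sigma>T g gT (Suc t)) x s u)
        in (INF u\<in>UNIV. SUP p\<in>prob_simplex. ereal (ip p (\<V> u)))
             = (SUP p\<in>prob_simplex. INF u\<in>UNIV. ereal (ip p (\<V> u)))
         \<and> (INF u\<in>UNIV. SUP p\<in>prob_simplex. ereal (ip p (\<V> u))) \<noteq> \<infinity>
         \<and> (INF u\<in>UNIV. SUP p\<in>prob_simplex. ereal (ip p (\<V> u))) \<noteq> -\<infinity>)
     \<and> (\<forall>t<T. \<forall>s. convex_on UNIV (\<lambda>x. Vfun T A B P q \<sigma> \<sigma>T g gT t x s)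
                 \<and> continuous_on UNIV (\<lambda>x. Vfun T A B P q \<sigma> \<sigma>T g gT t x s))
     \<and> (let \<V> = (\<lambda>t x s u. stage_vec A B P q \<sigma> g t (Vfun T A B P q \<sigma> \<sigma>T g gT (Suc t)) x s u);
            argopt = (\<lambda>us ps. \<forall>t<T. \<forall>x s.
               (\<forall>u. (SUP p\<in>prob_simplex. ereal (ip p (\<V> t x s (us t x s))))
                     \<le> (SUP p\<in>prob_simplex. ereal (ip p (\<V> t x s u))))
             \<and> ps t x s \<in> prob_simplex
             \<and> (\<forall>p\<in>prob_simplex. (INF u\<in>UNIV. ereal (ip p (\<V> t x s u)))
                     \<le> (INF u\<in>UNIV. ereal (ip (ps t x s) (\<V> t x s u)))))
        in (\<exists>us ps. argopt us ps)
         \<and> (\<forall>us ps. argopt us ps \<longrightarrow>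
              (\<forall>x0 s0. saddle_point T A B P q \<sigma> \<sigma>T g gT x0 s0 us (\<lambda>t x s u. ps t x s))))"
proof -
  have okPq: "okPq P q" using P_nonneg P_stoch q_range by (simp add: okPq_def)
  let ?V = "Vfun T A B P q \<sigma> \<sigma>T g gT"
  let ?F = "\<lambda>t. stage_vec A B P q \<sigma> g t (?V (Suc t))"
  let ?M = "\<lambda>t x s u. Max (range (?F t x s u))"
  have GT: "GoodW (?V T)"
    unfolding GoodW_def Vfun_T
  proof (intro conjI allI)
    fix i
    show "convex_on UNIV (\<lambda>x. \<sigma>T x - gT i)"
    proof (rule cvxI)
      fix x y :: "real^'n" and l m :: real
      assume lm: "0 \<le> l" "0 \<le> m" "l + m = 1"
      have "\<sigma>T (l *\<^sub>R x + m *\<^sub>R y) \<le> l * \<sigma>T x + m * \<sigma>T y" by (rule cvxD[OF H3 lm])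
      moreover have "gT i = l * gT i + m * gT i" using lm(3) by (metis distrib_right mult_1)
      ultimately show "\<sigma>T (l *\<^sub>R x + m *\<^sub>R y) - gT i \<le> l * (\<sigma>T x - gT i) + m * (\<sigma>T y - gT i)"
        by (simp add: algebra_simps)
    qed
  next
    have "- Max (range gT) \<le> \<sigma>T x - gT i" for x i
      using \<sigma>T_nonneg[of x] Max_range_ge[of gT i] by linarith
    then show "\<exists>L. \<forall>x i. L \<le> \<sigma>T x - gT i" by blast
  qed
  have SM: "(\<forall>x s. \<exists>us. \<forall>u. ?M t x s us \<le> ?M t x s u)
    \<and> GoodW (\<lambda>x s. ?M t x s (SOME us. \<forall>u. ?M t x s us \<le> ?M t x s u))
    \<and> (\<forall>x s us. (\<forall>u. ?M t x s us \<le> ?M t x s u) \<longrightarrow> (\<exists>p\<in>prob_simplex. \<forall>u. ?M t x s us \<le> ip p (?F t x s u)))"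
    if "t < T" "GoodW (?V (Suc t))" for t
  proof -
    note sm = stage_main[where P=P and q=q and W="?V (Suc t)" and A=A and B=B and \<sigma>=\<sigma> and g=g and t=t,
        OF P_nonneg P_stoch q_range H1[OF that(1)] H2[OF that(1)] H4u[OF that(1)] \<sigma>_nonneg[OF that(1)] that(2)]
    show ?thesis using sm by blast
  qed
  have Veq: "?V t x s = ?M t x s (SOME us. \<forall>u. ?M t x s us \<le> ?M t x s u)"
    if "t < T" "GoodW (?V (Suc t))" for t x s
  proof -
    have "\<exists>us. \<forall>u. ?M t x s us \<le> ?M t x s u" using SM[OF that] by blast
    then have mn: "\<forall>u. ?M t x s (SOME us. \<forall>u. ?M t x s us \<le> ?M t x s u) \<le> ?M t x s u"
      by (rule someI_ex)
    show ?thesis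
      unfolding Vfun_step[OF that(1)] SUP_simplex
      by (subst INF_attained[where h = "?M t x s", OF mn[rule_format]]) simp
  qed
  have Good: "GoodW (?V (T - k))" if "k \<le> T" for k
    using that
  proof (induction k)
    case 0 then show ?case using GT by simp
  next
    case (Suc k)
    have t: "T - Suc k < T" and st: "Suc (T - Suc k) = T - k" using Suc.prems by auto
    have G1: "GoodW (?V (Suc (T - Suc k)))" unfolding st using Suc by simp
    have "?V (T - Suc k) = (\<lambda>x s. ?M (T - Suc k) x s (SOME us. \<forall>u. ?M (T - Suc k) x s us \<le> ?M (T - Suc k) x s u))"
      using Veq[OF t G1] by blast
    then show ?case using SM[OF t G1] by simp
  qed
  have GoodV: "GoodW (?V t)" if "t \<le> T" for t
    using Good[of "T - t"] that by simp
  define umin where "umin = (\<lambda>t x s. SOME us. \<forall>u. ?M t x s us \<le> ?M t x s u)"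
  have G1: "GoodW (?V (Suc t))" if "t < T" for t using GoodV that by simp
  have minf: "?M t x s (umin t x s) \<le> ?M t x s u" if "t < T" for t x s u
  proof -
    have "\<exists>us. \<forall>u. ?M t x s us \<le> ?M t x s u" using SM[OF that G1[OF that]] by blast
    then show ?thesis unfolding umin_def by (rule someI2_ex) blast
  qed
  have Vt: "?V t x s = ?M t x s (umin t x s)" if "t < T" for t x s
    unfolding umin_def by (rule Veq[OF that G1[OF that]])
  have pstar: "\<exists>p\<in>prob_simplex. \<forall>u. ?V t x s \<le> ip p (?F t x s u)" if "t < T" for t x s
    using SM[OF that G1[OF that]] minf[OF that] unfolding Vt[OF that] by blast
  have INFSUP: "(INF u\<in>UNIV. SUP p\<in>prob_simplex. ereal (ip p (?F t x s u))) = ereal (?V t x s)"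
    if "t < T" for t x s
    unfolding SUP_simplex Vt[OF that]
    by (rule INF_attained[where h = "?M t x s"]) (rule minf[OF that])
  have INFle: "(INF u\<in>UNIV. ereal (ip p (?F t x s u))) \<le> ereal (?V t x s)"
    if "t < T" "p \<in> prob_simplex" for t x s p
  proof -
    have "(INF u\<in>UNIV. ereal (ip p (?F t x s u))) \<le> ereal (ip p (?F t x s (umin t x s)))"
      by (rule INF_lower) simp
    also have "\<dots> \<le> ereal (?V t x s)"
      unfolding Vt[OF that(1)] using ip_le_Max[OF that(2)] by simp
    finally show ?thesis .
  qed
  have INFge: "ereal (?V t x s) \<le> (INF u\<in>UNIV. ereal (ip p (?F t x s u)))"
    if "\<forall>u. ?V t x s \<le> ip p (?F t x s u)" for t x s p
    by (rule INF_greatest) (simp add: that)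
  have SUPINF: "(SUP p\<in>prob_simplex. INF u\<in>UNIV. ereal (ip p (?F t x s u))) = ereal (?V t x s)"
    if tT: "t < T" for t x s
  proof (rule antisym)
    show "(SUP p\<in>prob_simplex. INF u\<in>UNIV. ereal (ip p (?F t x s u))) \<le> ereal (?V t x s)"
      by (rule SUP_least) (rule INFle[OF that])
    obtain p where p: "p \<in> prob_simplex" "\<forall>u. ?V t x s \<le> ip p (?F t x s u)" using pstar[OF tT] by blast
    have "ereal (?V t x s) \<le> (INF u\<in>UNIV. ereal (ip p (?F t x s u)))" by (rule INFge[OF p(2)])
    also have "\<dots> \<le> (SUP p\<in>prob_simplex. INF u\<in>UNIV. ereal (ip p (?F t x s u)))"
      by (rule SUP_upper[OF p(1)])
    finally show "ereal (?V t x s) \<le> (SUP p\<in>prob_simplex. INF u\<in>UNIV. ereal (ip p (?F t x s u)))" .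
  qed
  have part1: "\<forall>t<T. \<forall>x s.
        let \<V> = (\<lambda>u. stage_vec A B P q \<sigma> g t (Vfun T A B P q \<sigma> \<sigma>T g gT (Suc t)) x s u)
        in (INF u\<in>UNIV. SUP p\<in>prob_simplex. ereal (ip p (\<V> u)))
             = (SUP p\<in>prob_simplex. INF u\<in>UNIV. ereal (ip p (\<V> u)))
         \<and> (INF u\<in>UNIV. SUP p\<in>prob_simplex. ereal (ip p (\<V> u))) \<noteq> \<infinity>
         \<and> (INF u\<in>UNIV. SUP p\<in>prob_simplex. ereal (ip p (\<V> u))) \<noteq> -\<infinity>"
    unfolding Let_def using INFSUP SUPINF by simp
  have part2: "\<forall>t<T. \<forall>s. convex_on UNIV (\<lambda>x. Vfun T A B P q \<sigma> \<sigma>T g gT t x s)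
                 \<and> continuous_on UNIV (\<lambda>x. Vfun T A B P q \<sigma> \<sigma>T g gT t x s)"
  proof (intro allI impI conjI)
    fix t s assume "t < T"
    then have gw: "GoodW (?V t)" using GoodV by simp
    then show "convex_on UNIV (\<lambda>x. ?V t x s)" by (simp add: GoodW_def)
    show "continuous_on UNIV (\<lambda>x. ?V t x s)" by (rule GoodW_cont[OF gw])
  qed
  define ps0 where "ps0 = (\<lambda>t x s. SOME p. p \<in> prob_simplex \<and> (\<forall>u. ?V t x s \<le> ip p (?F t x s u)))"
  have ps0: "ps0 t x s \<in> prob_simplex \<and> (\<forall>u. ?V t x s \<le> ip (ps0 t x s) (?F t x s u))" if "t < T" for t x s
  proof -
    have "\<exists>p. p \<in> prob_simplex \<and> (\<forall>u. ?V t x s \<le> ip p (?F t x s u))" using pstar[OF that] by blast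
    then show ?thesis unfolding ps0_def by (rule someI_ex)
  qed
  have F1: "(SUP p\<in>prob_simplex. ereal (ip p (?F t x s (umin t x s)))) \<le> (SUP p\<in>prob_simplex. ereal (ip p (?F t x s u)))"
    if "t < T" for t x s u
    unfolding SUP_simplex using minf[OF that] by simp
  have F3: "(INF u\<in>UNIV. ereal (ip p (?F t x s u))) \<le> (INF u\<in>UNIV. ereal (ip (ps0 t x s) (?F t x s u)))"
    if "t < T" "p \<in> prob_simplex" for t x s p
    using INFle[OF that] INFge[of t x s "ps0 t x s"] ps0[OF that(1)] by (meson order_trans)
  define amax where "amax = (\<lambda>v :: 'act \<Rightarrow> real. SOME a. Max (range v) = v a)"
  have amax: "Max (range v) = v (amax v)" for v :: "'act \<Rightarrow> real"
  proof -
    obtain a where "Max (range v) = v a" by (rule Max_range_attained)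
    then show ?thesis unfolding amax_def by (rule someI)
  qed
  define pg where "pg = (\<lambda>t x s u. (\<lambda>b. if b = amax (?F t x s u) then 1 else (0::real)))"
  have pg_s: "pg \<in> jammer_strats T" unfolding jammer_strats_def pg_def using vertex_simplex by blast
  have pg_ge: "?V t x s \<le> ip (pg t x s u) (?F t x s u)" if "t < T" for t x s u
  proof -
    have "ip (pg t x s u) (?F t x s u) = ?M t x s u" unfolding pg_def ip_vertex amax[symmetric] ..
    then show ?thesis using Vt[OF that] minf[OF that] by simp
  qed
  have termW: "\<forall>x s. ?V T x s = \<sigma>T x - gT s" by (simp add: Vfun_T)
  have part3: "(let \<V> = (\<lambda>t x s u. stage_vec A B P q \<sigma> g t (Vfun T A B P q \<sigma> \<sigma>T g gT (Suc t)) x s u);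
            argopt = (\<lambda>us ps. \<forall>t<T. \<forall>x s.
               (\<forall>u. (SUP p\<in>prob_simplex. ereal (ip p (\<V> t x s (us t x s))))
                     \<le> (SUP p\<in>prob_simplex. ereal (ip p (\<V> t x s u))))
             \<and> ps t x s \<in> prob_simplex
             \<and> (\<forall>p\<in>prob_simplex. (INF u\<in>UNIV. ereal (ip p (\<V> t x s u)))
                     \<le> (INF u\<in>UNIV. ereal (ip (ps t x s) (\<V> t x s u)))))
        in (\<exists>us ps. argopt us ps)
         \<and> (\<forall>us ps. argopt us ps \<longrightarrow>
              (\<forall>x0 s0. saddle_point T A B P q \<sigma> \<sigma>T g gT x0 s0 us (\<lambda>t x s u. ps t x s))))"
    unfolding Let_def
  proof (intro conjI allI impI)
    show "\<exists>us ps. \<forall>t<T. \<forall>x s.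
               (\<forall>u. (SUP p\<in>prob_simplex. ereal (ip p (?F t x s (us t x s))))
                     \<le> (SUP p\<in>prob_simplex. ereal (ip p (?F t x s u))))
             \<and> ps t x s \<in> prob_simplex
             \<and> (\<forall>p\<in>prob_simplex. (INF u\<in>UNIV. ereal (ip p (?F t x s u)))
                     \<le> (INF u\<in>UNIV. ereal (ip (ps t x s) (?F t x s u))))"
      by (rule exI[of _ umin], rule exI[of _ ps0]) (use F1 ps0 F3 in blast)
  next
    fix us ps x0 s0
    assume A: "\<forall>t<T. \<forall>x s.
               (\<forall>u. (SUP p\<in>prob_simplex. ereal (ip p (?F t x s (us t x s))))
                     \<le> (SUP p\<in>prob_simplex. ereal (ip p (?F t x s u))))
             \<and> ps t x s \<in> prob_simplex
             \<and> (\<forall>p\<in>prob_simplex. (INF u\<in>UNIV. ereal (ip p (?F t x s u)))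
                     \<le> (INF u\<in>UNIV. ereal (ip (ps t x s) (?F t x s u))))"
    let ?ps = "\<lambda>t x s (u::real^'m). ps t x s"
    have a: "ip p (?F t x s (us t x s)) \<le> ?V t x s" if "t < T" "p \<in> prob_simplex" for t x s p
    proof -
      have "ereal (ip p (?F t x s (us t x s))) \<le> (SUP p\<in>prob_simplex. ereal (ip p (?F t x s (us t x s))))"
        by (rule SUP_upper[OF that(2)])
      also have "\<dots> \<le> (SUP p\<in>prob_simplex. ereal (ip p (?F t x s (umin t x s))))" using A that(1) by blast
      also have "\<dots> = ereal (?V t x s)" unfolding SUP_simplex Vt[OF that(1)] ..
      finally show ?thesis by simp
    qed
    have b: "?V t x s \<le> ip (ps t x s) (?F t x s u)" if "t < T" for t x s u
    proof -
      have "ereal (?V t x s) \<le> (INF u\<in>UNIV. ereal (ip (ps0 t x s) (?F t x s u)))"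
        using INFge ps0[OF that] by blast
      also have "\<dots> \<le> (INF u\<in>UNIV. ereal (ip (ps t x s) (?F t x s u)))" using A that ps0[OF that] by blast
      also have "\<dots> \<le> ereal (ip (ps t x s) (?F t x s u))" by (rule INF_lower) simp
      finally show ?thesis by simp
    qed
    have ps_s: "?ps \<in> jammer_strats T" unfolding jammer_strats_def using A by blast
    have E1: "expected_payoff T A B P q \<sigma> \<sigma>T g gT x0 s0 us pj \<le> ?V 0 x0 s0" if "pj \<in> jammer_strats T" for pj
      by (rule DP_le[where W = "?V", OF _ okPq termW]) (use that a in \<open>auto simp: jammer_strats_def\<close>)
    have E2: "?V 0 x0 s0 \<le> expected_payoff T A B P q \<sigma> \<sigma>T g gT x0 s0 u ?ps" for u
      by (rule DP_ge[where W = "?V", OF _ okPq termW]) (use ps_s b in \<open>auto simp: jammer_strats_def\<close>)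
    have E3: "?V 0 x0 s0 \<le> expected_payoff T A B P q \<sigma> \<sigma>T g gT x0 s0 u pg" for u
      by (rule DP_ge[where W = "?V", OF _ okPq termW]) (use pg_s pg_ge in \<open>auto simp: jammer_strats_def\<close>)
    have E0: "expected_payoff T A B P q \<sigma> \<sigma>T g gT x0 s0 us ?ps = ?V 0 x0 s0"
      using E1[OF ps_s] E2[of us] by simp
    have IS: "(INF u\<in>UNIV. SUP p\<in>jammer_strats T. ereal (expected_payoff T A B P q \<sigma> \<sigma>T g gT x0 s0 u p))
        = ereal (?V 0 x0 s0)"
    proof (rule antisym)
      have "(INF u\<in>UNIV. SUP p\<in>jammer_strats T. ereal (expected_payoff T A B P q \<sigma> \<sigma>T g gT x0 s0 u p))
          \<le> (SUP p\<in>jammer_strats T. ereal (expected_payoff T A B P q \<sigma> \<sigma>T g gT x0 s0 us p))"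
        by (rule INF_lower) simp
      also have "\<dots> \<le> ereal (?V 0 x0 s0)" by (rule SUP_least) (simp add: E1)
      finally show "(INF u\<in>UNIV. SUP p\<in>jammer_strats T. ereal (expected_payoff T A B P q \<sigma> \<sigma>T g gT x0 s0 u p))
          \<le> ereal (?V 0 x0 s0)" .
      show "ereal (?V 0 x0 s0) \<le> (INF u\<in>UNIV. SUP p\<in>jammer_strats T. ereal (expected_payoff T A B P q \<sigma> \<sigma>T g gT x0 s0 u p))"
      proof (rule INF_greatest)
        fix u :: "nat \<Rightarrow> real^'n \<Rightarrow> 'f \<Rightarrow> real^'m"
        have "ereal (?V 0 x0 s0) \<le> ereal (expected_payoff T A B P q \<sigma> \<sigma>T g gT x0 s0 u pg)" using E3 by simp
        also have "\<dots> \<le> (SUP p\<in>jammer_strats T. ereal (expected_payoff T A B P q \<sigma> \<sigma>T g gT x0 s0 u p))"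
          by (rule SUP_upper[OF pg_s])
        finally show "ereal (?V 0 x0 s0) \<le> (SUP p\<in>jammer_strats T. ereal (expected_payoff T A B P q \<sigma> \<sigma>T g gT x0 s0 u p))" .
      qed
    qed
    have SI: "(SUP p\<in>jammer_strats T. INF u\<in>UNIV. ereal (expected_payoff T A B P q \<sigma> \<sigma>T g gT x0 s0 u p))
        = ereal (?V 0 x0 s0)"
    proof (rule antisym)
      show "(SUP p\<in>jammer_strats T. INF u\<in>UNIV. ereal (expected_payoff T A B P q \<sigma> \<sigma>T g gT x0 s0 u p))
          \<le> ereal (?V 0 x0 s0)"
      proof (rule SUP_least)
        fix pj :: "nat \<Rightarrow> real^'n \<Rightarrow> 'f \<Rightarrow> real^'m \<Rightarrow> 'act \<Rightarrow> real" assume "pj \<in> jammer_strats T"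
        have "(INF u\<in>UNIV. ereal (expected_payoff T A B P q \<sigma> \<sigma>T g gT x0 s0 u pj))
            \<le> ereal (expected_payoff T A B P q \<sigma> \<sigma>T g gT x0 s0 us pj)" by (rule INF_lower) simp
        also have "\<dots> \<le> ereal (?V 0 x0 s0)" using E1[OF \<open>pj \<in> jammer_strats T\<close>] by simp
        finally show "(INF u\<in>UNIV. ereal (expected_payoff T A B P q \<sigma> \<sigma>T g gT x0 s0 u pj)) \<le> ereal (?V 0 x0 s0)" .
      qed
      have "ereal (?V 0 x0 s0) \<le> (INF u\<in>UNIV. ereal (expected_payoff T A B P q \<sigma> \<sigma>T g gT x0 s0 u ?ps))"
        by (rule INF_greatest) (simp add: E2)
      also have "\<dots> \<le> (SUP p\<in>jammer_strats T. INF u\<in>UNIV. ereal (expected_payoff T A B P q \<sigma> \<sigma>T g gT x0 s0 u p))"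
        by (rule SUP_upper[OF ps_s])
      finally show "ereal (?V 0 x0 s0) \<le> (SUP p\<in>jammer_strats T. INF u\<in>UNIV. ereal (expected_payoff T A B P q \<sigma> \<sigma>T g gT x0 s0 u p))" .
    qed
    show "saddle_point T A B P q \<sigma> \<sigma>T g gT x0 s0 us ?ps"
      unfolding saddle_point_def using ps_s E0 IS SI by simp
  qed
  show ?thesis using part1 part2 part3 by blast
qed

end
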